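(* Let $k\ge 1$ and $r\ge 2$ be integers and let $d_1\ge d_2\ge\cdots\ge d_k$ be positive integers. Then for all sufficiently large $n$, $$ex^{lin}_r\Big(n,\bigcup_{i=1}^k S^+_{d_i}\Big)\le \max_{1\le i\le k}\left\{\Big(\frac{d_i-1}{r}+\frac{i-1}{r-1}\Big)(n-i+1)+\frac{\binom{i-1}{2}}{\binom{r}{2}}\right\}.$$ Moreover, this bound is sharp asymptotically.
   Context: An $r$-uniform hypergraph is linear if every two of its hyperedges share at most one vertex. For a linear $r$-uniform hypergraph $F$, $ex^{lin}_r(n,F)$ is the maximum number of hyperedges in an $n$-vertex $r$-uniform linear hypergraph containing no copy of $F$ as a subhypergraph. $S_\ell$ denotes the star $K_{1,\ell}$ with $\ell$ edges. For a graph $F$ and $r\ge 2$, the expansion $F^+$ is the $r$-uniform hypergraph obtained from $F$ by adding $r-2$ new vertices to each edge, all added vertices being distinct. $\bigcup_{i=1}^k S^+_{d_i}$ denotes the vertex-disjoint union of $S^+_{d_1},\dots,S^+_{d_k}$. *)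

theory Defs
  imports Complex_Main
begin

definition linear_uniform :: "nat \<Rightarrow> 'a set \<Rightarrow> 'a set set \<Rightarrow> bool" where
  "linear_uniform r V H \<longleftrightarrow> finite V \<and> (\<forall>e\<in>H. e \<subseteq> V \<and> card e = r) \<and>
     (\<forall>e1\<in>H. \<forall>e2\<in>H. e1 \<noteq> e2 \<longrightarrow> card (e1 \<inter> e2) \<le> 1)"

definition contains_copy :: "'a set set \<Rightarrow> 'b set set \<Rightarrow> bool" where
  "contains_copy H F \<longleftrightarrow> (\<exists>f. inj_on f (\<Union>F) \<and> (\<forall>e\<in>F. f ` e \<in> H))"

definition ex_lin :: "nat \<Rightarrow> nat \<Rightarrow> 'b set set \<Rightarrow> nat" where
  "ex_lin r n F = Max {card H | H :: nat set set. linear_uniform r {..<n} H \<and> \<not> contains_copy H F}"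

text \<open>The j-th hyperedge of the expanded star in component i: centre (i,0,0), leaf (i,j,0),
  and r-2 new vertices (i,j,t), 1 \<le> t \<le> r-2.\<close>
definition star_edge :: "nat \<Rightarrow> nat \<Rightarrow> nat \<Rightarrow> (nat \<times> nat \<times> nat) set" where
  "star_edge r i j = {(i,0,0), (i,j,0)} \<union> {(i,j,t) | t. 1 \<le> t \<and> t \<le> r - 2}"

definition star_forest_plus :: "nat \<Rightarrow> nat \<Rightarrow> (nat \<Rightarrow> nat) \<Rightarrow> (nat \<times> nat \<times> nat) set set" where
  "star_forest_plus r k d = {star_edge r i j | i j. 1 \<le> i \<and> i \<le> k \<and> 1 \<le> j \<and> j \<le> d i}"

end

theory Submission
  imports Defs "HOL-Computational_Algebra.Primes"
begin


definition Vx :: "(nat \<Rightarrow> 'a) \<Rightarrow> (nat \<Rightarrow> 'a set set) \<Rightarrow> nat \<Rightarrow> 'a set" where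
  "Vx c S i = insert (c i) (\<Union>(S i))"

definition pstar :: "'a set set \<Rightarrow> (nat \<Rightarrow> nat) \<Rightarrow> nat set \<Rightarrow> (nat \<Rightarrow> 'a) \<Rightarrow> (nat \<Rightarrow> 'a set set) \<Rightarrow> bool" where
  "pstar H d I c S \<longleftrightarrow> (\<forall>i\<in>I. S i \<subseteq> H \<and> finite (S i) \<and> card (S i) = d i \<and> (\<forall>e\<in>S i. c i \<in> e)) \<and>
     (\<forall>i\<in>I. \<forall>i'\<in>I. i \<noteq> i' \<longrightarrow> Vx c S i \<inter> Vx c S i' = {})"

lemma star_edge_alt:
  assumes "r \<ge> 2" "j \<ge> 1"
  shows "star_edge r i j = insert (i,0,0) ((\<lambda>t. (i,j,t)) ` {0..<r-1})"
proof -
  have "{(i,j,t) | t. 1 \<le> t \<and> t \<le> r - 2} \<union> {(i,j,0)} = (\<lambda>t. (i,j,t)) ` {0..<r-1}"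
    using assms by (auto simp: image_iff) 
  then show ?thesis unfolding star_edge_def by auto
qed

lemma Union_sfp:
  assumes "r \<ge> 2"
  shows "\<Union>(star_forest_plus r k d) = {(i,0,0) | i. 1 \<le> i \<and> i \<le> k \<and> 1 \<le> d i} \<union>
     {(i,j,t) | i j t. 1 \<le> i \<and> i \<le> k \<and> 1 \<le> j \<and> j \<le> d i \<and> t < r - 1}" (is "?L = ?R")
proof
  show "?L \<subseteq> ?R"
  proof
    fix x assume "x \<in> ?L"
    then obtain i j where ij: "1 \<le> i" "i \<le> k" "1 \<le> j" "j \<le> d i" "x \<in> star_edge r i j"
      unfolding star_forest_plus_def by blast
    then show "x \<in> ?R" using assms by (auto simp: star_edge_alt)
  qed
next
  show "?R \<subseteq> ?L"
  proof
    fix x assume "x \<in> ?R"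
    then obtain i j t where "x = (i,j,t)" "1 \<le> i" "i \<le> k" "j = 0 \<and> t = 0 \<and> 1 \<le> d i \<or> 1 \<le> j \<and> j \<le> d i \<and> t < r - 1"
      by blast
    then show "x \<in> ?L"
    proof (elim disjE)
      assume a: "x = (i,j,t)" "1 \<le> i" "i \<le> k" "j = 0 \<and> t = 0 \<and> 1 \<le> d i"
      then have "star_edge r i 1 \<in> star_forest_plus r k d" "x \<in> star_edge r i 1"
        unfolding star_forest_plus_def star_edge_def by auto
      then show ?thesis by blast
    next
      assume a: "x = (i,j,t)" "1 \<le> i" "i \<le> k" "1 \<le> j \<and> j \<le> d i \<and> t < r - 1"
      then have "star_edge r i j \<in> star_forest_plus r k d"
        unfolding star_forest_plus_def by blast
      moreover have "x \<in> star_edge r i j" using a assms by (simp add: star_edge_alt)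
      ultimately show ?thesis by blast
    qed
  qed
qed


lemma copy_from_pstar:
  assumes lu: "linear_uniform r V H" and r2: "r \<ge> 2"
    and ps: "pstar H d {1..k} c S"
  shows "contains_copy H (star_forest_plus r k d)"
proof -
  have Sp: "\<And>i. i \<in> {1..k} \<Longrightarrow> S i \<subseteq> H \<and> finite (S i) \<and> card (S i) = d i \<and> (\<forall>e\<in>S i. c i \<in> e)"
    using ps unfolding pstar_def by blast
  have disj: "\<And>i i'. i \<in> {1..k} \<Longrightarrow> i' \<in> {1..k} \<Longrightarrow> i \<noteq> i' \<Longrightarrow> Vx c S i \<inter> Vx c S i' = {}"
    using ps unfolding pstar_def by blast
  have card_r: "\<And>e. e \<in> H \<Longrightarrow> card e = r" and fin_e: "\<And>e. e \<in> H \<Longrightarrow> finite e"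
    using lu unfolding linear_uniform_def by (auto intro: finite_subset)
  have lin: "\<And>e1 e2. e1 \<in> H \<Longrightarrow> e2 \<in> H \<Longrightarrow> e1 \<noteq> e2 \<Longrightarrow> card (e1 \<inter> e2) \<le> 1"
    using lu unfolding linear_uniform_def by blast
  have "\<forall>i\<in>{1..k}. \<exists>\<sigma>. bij_betw \<sigma> {1..d i} (S i)"
    using Sp ex_bij_betw_nat_finite_1 by metis
  then obtain \<sigma> where \<sigma>: "\<And>i. i \<in> {1..k} \<Longrightarrow> bij_betw (\<sigma> i) {1..d i} (S i)"
    by metis
  have "\<forall>i\<in>{1..k}. \<forall>j\<in>{1..d i}. \<exists>g. bij_betw g {0..<r-1} (\<sigma> i j - {c i})"
  proof (intro ballI)
    fix i j assume i: "i \<in> {1..k}" and j: "j \<in> {1..d i}"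
    have "\<sigma> i j \<in> S i" using \<sigma>[OF i] j bij_betwE by blast
    then have "\<sigma> i j \<in> H" "c i \<in> \<sigma> i j" using Sp[OF i] by auto
    then have "card (\<sigma> i j - {c i}) = r - 1" "finite (\<sigma> i j - {c i})" using card_r fin_e by auto
    then show "\<exists>g. bij_betw g {0..<r-1} (\<sigma> i j - {c i})"
      using ex_bij_betw_nat_finite by metis
  qed
  then obtain g where g: "\<And>i j. i \<in> {1..k} \<Longrightarrow> j \<in> {1..d i} \<Longrightarrow> bij_betw (g i j) {0..<r-1} (\<sigma> i j - {c i})"
    by metis
  define f where "f = (\<lambda>(i::nat,j::nat,t::nat). if j = 0 then c i else g i j t)"
  have \<sigma>S: "\<sigma> i j \<in> S i" if "i \<in> {1..k}" "j \<in> {1..d i}" for i j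
    using bij_betwE[OF \<sigma>[OF that(1)]] that(2) by simp
  have gin: "g i j t \<in> \<sigma> i j - {c i}" if "i \<in> {1..k}" "j \<in> {1..d i}" "t < r - 1" for i j t
    using bij_betwE[OF g[OF that(1,2)]] that(3) by simp
  have gVx: "\<And>i j t. i \<in> {1..k} \<Longrightarrow> j \<in> {1..d i} \<Longrightarrow> t < r - 1 \<Longrightarrow> g i j t \<in> Vx c S i"
    using gin \<sigma>S unfolding Vx_def by blast
  have cVx: "\<And>i. c i \<in> Vx c S i" unfolding Vx_def by simp
  have img: "f ` star_edge r i j = \<sigma> i j" if i: "i \<in> {1..k}" and j: "j \<in> {1..d i}" for i j
  proof -
    have "f ` star_edge r i j = insert (c i) (g i j ` {0..<r-1})"
      using j r2 by (auto simp: star_edge_alt f_def image_image)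
    also have "g i j ` {0..<r-1} = \<sigma> i j - {c i}" using g[OF i j] bij_betw_imp_surj_on by metis
    also have "insert (c i) (\<sigma> i j - {c i}) = \<sigma> i j" using Sp[OF i] \<sigma>S[OF i j] by auto
    finally show ?thesis .
  qed
  have "\<forall>e\<in>star_forest_plus r k d. f ` e \<in> H"
    unfolding star_forest_plus_def using img \<sigma>S Sp by fastforce
  moreover have "inj_on f (\<Union>(star_forest_plus r k d))"
  proof (rule inj_onI)
    fix x y assume x: "x \<in> \<Union>(star_forest_plus r k d)" and y: "y \<in> \<Union>(star_forest_plus r k d)"
      and fxy: "f x = f y"
    obtain i j t where xe: "x = (i,j,t)" by (cases x) auto
    obtain i' j' t' where ye: "y = (i',j',t')" by (cases y) auto
    have xc: "1 \<le> i \<and> i \<le> k \<and> (j = 0 \<and> t = 0 \<or> 1 \<le> j \<and> j \<le> d i \<and> t < r - 1)"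
      using x unfolding xe Union_sfp[OF r2] by blast
    have yc: "1 \<le> i' \<and> i' \<le> k \<and> (j' = 0 \<and> t' = 0 \<or> 1 \<le> j' \<and> j' \<le> d i' \<and> t' < r - 1)"
      using y unfolding ye Union_sfp[OF r2] by blast
    have ik: "i \<in> {1..k}" using xc by simp
    have ik': "i' \<in> {1..k}" using yc by simp
    have fx0: "j = 0 \<Longrightarrow> f x = c i" by (simp add: xe f_def)
    have fy0: "j' = 0 \<Longrightarrow> f y = c i'" by (simp add: ye f_def)
    have fx1: "f x \<in> \<sigma> i j - {c i}" "j \<in> {1..d i}" "t < r - 1" if "j \<noteq> 0"
    proof -
      show "j \<in> {1..d i}" "t < r - 1" using xc that by auto
      then show "f x \<in> \<sigma> i j - {c i}" using gin[OF ik] that by (simp add: xe f_def)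
    qed
    have fy1: "f y \<in> \<sigma> i' j' - {c i'}" "j' \<in> {1..d i'}" "t' < r - 1" if "j' \<noteq> 0"
    proof -
      show "j' \<in> {1..d i'}" "t' < r - 1" using yc that by auto
      then show "f y \<in> \<sigma> i' j' - {c i'}" using gin[OF ik'] that by (simp add: ye f_def)
    qed
    have fxV: "f x \<in> Vx c S i"
    proof (cases "j = 0")
      case True then show ?thesis using fx0 cVx by simp
    next
      case False then show ?thesis using fx1[OF False] \<sigma>S[OF ik] unfolding Vx_def by blast
    qed
    have fyV: "f y \<in> Vx c S i'"
    proof (cases "j' = 0")
      case True then show ?thesis using fy0 cVx by simp
    next
      case False then show ?thesis using fy1[OF False] \<sigma>S[OF ik'] unfolding Vx_def by blast
    qed
    have ii: "i = i'"
    proof (rule ccontr)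
      assume "i \<noteq> i'"
      then have "Vx c S i \<inter> Vx c S i' = {}" by (rule disj[OF ik ik'])
      moreover have "f x \<in> Vx c S i \<inter> Vx c S i'" using fxV fyV fxy by simp
      ultimately show False by simp
    qed
    show "x = y"
    proof (cases "j = 0")
      case True
      show ?thesis
      proof (cases "j' = 0")
        case True
        then show ?thesis using \<open>j = 0\<close> xc yc ii xe ye by simp
      next
        case False
        then show ?thesis using fy1 fx0 True fxy ii by simp
      qed
    next
      case False
      show ?thesis
      proof (cases "j' = 0")
        case True
        then show ?thesis using fx1 fy0 False fxy ii by simp
      next
        case False
        have fx: "f x \<in> \<sigma> i j - {c i}" "j \<in> {1..d i}" "t < r - 1" using fx1 \<open>j \<noteq> 0\<close> by auto
        have fy: "f y \<in> \<sigma> i j' - {c i}" "j' \<in> {1..d i}" "t' < r - 1" using fy1 False ii by auto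
        have jj: "j = j'"
        proof (rule ccontr)
          assume "j \<noteq> j'"
          then have ne: "\<sigma> i j \<noteq> \<sigma> i j'"
            using \<sigma>[OF ik] fx(2) fy(2) unfolding bij_betw_def inj_on_def by blast
          have inH: "\<sigma> i j \<in> H" "\<sigma> i j' \<in> H" using \<sigma>S[OF ik] Sp[OF ik] fx(2) fy(2) by auto
          have ci: "c i \<in> \<sigma> i j" "c i \<in> \<sigma> i j'" using \<sigma>S[OF ik] Sp[OF ik] fx(2) fy(2) by auto
          have "{c i, f x} \<subseteq> \<sigma> i j \<inter> \<sigma> i j'"
            using fx(1) fy(1) fxy ci by auto
          moreover have "card {c i, f x} = 2" using fx by auto
          moreover have "finite (\<sigma> i j \<inter> \<sigma> i j')" using fin_e inH by auto
          ultimately have "2 \<le> card (\<sigma> i j \<inter> \<sigma> i j')" by (metis card_mono)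
          with lin[OF inH ne] show False by simp
        qed
        have "g i j t = g i j t'" using fxy \<open>j \<noteq> 0\<close> False jj ii by (simp add: xe ye f_def)
        then have "t = t'" using g[OF ik fx(2)] fx(3) fy(3) unfolding bij_betw_def inj_on_def by auto
        then show ?thesis using xe ye ii jj by simp
      qed
    qed
  qed
  ultimately show ?thesis unfolding contains_copy_def by blast
qed


lemma pstar_from_copy:
  assumes r2: "r \<ge> 2" and cc: "contains_copy H (star_forest_plus r k d)"
    and dpos: "\<And>i. 1 \<le> i \<Longrightarrow> i \<le> k \<Longrightarrow> d i \<ge> 1"
  shows "\<exists>c S. pstar H d {1..k} c S"
proof -
  obtain f where inj: "inj_on f (\<Union>(star_forest_plus r k d))"
    and fe: "\<And>e. e \<in> star_forest_plus r k d \<Longrightarrow> f ` e \<in> H"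
    using cc unfolding contains_copy_def by blast
  define U where "U = \<Union>(star_forest_plus r k d)"
  define c where "c = (\<lambda>i. f (i,0,0))"
  define S where "S = (\<lambda>i. (\<lambda>j. f ` star_edge r i j) ` {1..d i})"
  define A where "A = (\<lambda>i. {x \<in> U. fst x = i})"
  have seU: "star_edge r i j \<subseteq> U" if "i \<in> {1..k}" "j \<in> {1..d i}" for i j
    using that unfolding U_def star_forest_plus_def by auto
  have seF: "star_edge r i j \<in> star_forest_plus r k d" if "i \<in> {1..k}" "j \<in> {1..d i}" for i j
    using that unfolding star_forest_plus_def by auto
  have i0U: "(i,0,0) \<in> U" if "i \<in> {1..k}" for i
    using that dpos unfolding U_def Union_sfp[OF r2] by auto
  have seA: "star_edge r i j \<subseteq> A i" if "i \<in> {1..k}" "j \<in> {1..d i}" for i j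
    using seU[OF that] unfolding A_def star_edge_def by auto
  have VxA: "Vx c S i \<subseteq> f ` A i" if i: "i \<in> {1..k}" for i
  proof -
    have "c i \<in> f ` A i" using i0U[OF i] unfolding c_def A_def by auto
    moreover have "\<Union>(S i) \<subseteq> f ` A i" unfolding S_def using seA[OF i] by blast
    ultimately show ?thesis unfolding Vx_def by blast
  qed
  have "pstar H d {1..k} c S"
    unfolding pstar_def
  proof (intro conjI ballI impI)
    fix i assume i: "i \<in> {1..k}"
    show "S i \<subseteq> H" unfolding S_def using fe seF[OF i] by blast
    show "finite (S i)" unfolding S_def by simp
    have "inj_on (\<lambda>j. f ` star_edge r i j) {1..d i}"
    proof (rule inj_onI)
      fix j j' assume j: "j \<in> {1..d i}" and j': "j' \<in> {1..d i}" and eq: "f ` star_edge r i j = f ` star_edge r i j'"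
      have "(i,j,0) \<in> star_edge r i j" unfolding star_edge_def by simp
      then have "f (i,j,0) \<in> f ` star_edge r i j'" using eq by blast
      then obtain y where y: "y \<in> star_edge r i j'" "f (i,j,0) = f y" by blast
      have "(i,j,0) \<in> U" using seU[OF i j] \<open>(i,j,0) \<in> star_edge r i j\<close> by blast
      moreover have "y \<in> U" using seU[OF i j'] y(1) by blast
      ultimately have "(i,j,0) = y" using inj y(2) unfolding U_def inj_on_def by blast
      then have "(i,j,0) \<in> star_edge r i j'" using y(1) by simp
      then show "j = j'" using j unfolding star_edge_def by auto
    qed
    then show "card (S i) = d i" unfolding S_def by (simp add: card_image)
    fix e assume "e \<in> S i"
    then show "c i \<in> e" unfolding S_def c_def star_edge_def by auto
  next
    fix i i' assume i: "i \<in> {1..k}" and i': "i' \<in> {1..k}" and ne: "i \<noteq> i'"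
    have "A i \<inter> A i' = {}" unfolding A_def using ne by auto
    moreover have "f ` (A i \<inter> A i') = f ` A i \<inter> f ` A i'"
      by (rule inj_on_image_Int[OF inj]) (auto simp: A_def U_def)
    ultimately have "f ` A i \<inter> f ` A i' = {}" by simp
    then show "Vx c S i \<inter> Vx c S i' = {}" using VxA[OF i] VxA[OF i'] by blast
  qed
  then show ?thesis by blast
qed

lemma no_pstar_criterion:
  assumes finH: "finite H" and finT: "finite T"
    and i0: "1 \<le> i0" "i0 \<le> k" and cT: "card T < i0"
    and dmono: "\<And>i j. 1 \<le> i \<Longrightarrow> i \<le> j \<Longrightarrow> j \<le> k \<Longrightarrow> d j \<le> d i"
    and low: "\<And>u. u \<notin> T \<Longrightarrow> card {e \<in> H. u \<in> e \<and> e \<inter> T = {}} < d i0"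
  shows "\<not> pstar H d {1..k} c S"
proof
  assume ps: "pstar H d {1..k} c S"
  have Sp: "\<And>i. i \<in> {1..k} \<Longrightarrow> S i \<subseteq> H \<and> finite (S i) \<and> card (S i) = d i \<and> (\<forall>e\<in>S i. c i \<in> e)"
    using ps unfolding pstar_def by blast
  have disj: "\<And>i i'. i \<in> {1..k} \<Longrightarrow> i' \<in> {1..k} \<Longrightarrow> i \<noteq> i' \<Longrightarrow> Vx c S i \<inter> Vx c S i' = {}"
    using ps unfolding pstar_def by blast
  have ex: "\<exists>h. h \<in> T \<and> h \<in> Vx c S i" if i: "i \<in> {1..i0}" for i
  proof (cases "c i \<in> T")
    case True then show ?thesis unfolding Vx_def by blast
  next
    case False
    have ik: "i \<in> {1..k}" using i i0 by auto
    have "d i0 \<le> d i" using dmono[of i i0] i i0 by auto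
    also have "d i = card (S i)" using Sp[OF ik] by simp
    finally have dle: "d i0 \<le> card (S i)" .
    show ?thesis
    proof (rule ccontr)
      assume "\<not> ?thesis"
      then have "\<forall>e\<in>S i. e \<inter> T = {}" unfolding Vx_def by blast
      then have "S i \<subseteq> {e \<in> H. c i \<in> e \<and> e \<inter> T = {}}" using Sp[OF ik] by blast
      then have "card (S i) \<le> card {e \<in> H. c i \<in> e \<and> e \<inter> T = {}}"
        by (rule card_mono[rotated]) (simp add: finH)
      with dle low[OF False] show False by simp
    qed
  qed
  then obtain \<phi> where \<phi>: "\<And>i. i \<in> {1..i0} \<Longrightarrow> \<phi> i \<in> T \<and> \<phi> i \<in> Vx c S i" by metis
  have "inj_on \<phi> {1..i0}"
  proof (rule inj_onI)
    fix i i' assume i: "i \<in> {1..i0}" and i': "i' \<in> {1..i0}" and eq: "\<phi> i = \<phi> i'"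
    show "i = i'"
    proof (rule ccontr)
      assume ne: "i \<noteq> i'"
      have "i \<in> {1..k}" "i' \<in> {1..k}" using i i' i0 by auto
      then have "Vx c S i \<inter> Vx c S i' = {}" using disj ne by simp
      moreover have "\<phi> i \<in> Vx c S i \<inter> Vx c S i'" using \<phi>[OF i] \<phi>[OF i'] eq by simp
      ultimately show False by simp
    qed
  qed
  moreover have "\<phi> ` {1..i0} \<subseteq> T" using \<phi> by blast
  ultimately have "card {1..i0} \<le> card T" using finT by (metis card_inj_on_le)
  then show False using cT by simp
qed

lemma pstar_step:
  assumes ps: "pstar H d I c S" and i0: "i0 \<notin> I"
    and T: "T \<subseteq> H" "finite T" "card T = d i0" "\<forall>e\<in>T. v \<in> e"
    and dj: "insert v (\<Union>T) \<inter> (\<Union>i\<in>I. Vx c S i) = {}"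
  shows "pstar H d (insert i0 I) (c(i0:=v)) (S(i0:=T))"
proof -
  have V1: "Vx (c(i0:=v)) (S(i0:=T)) i = Vx c S i" if "i \<noteq> i0" for i
    using that unfolding Vx_def by simp
  have V2: "Vx (c(i0:=v)) (S(i0:=T)) i0 = insert v (\<Union>T)" unfolding Vx_def by simp
  show ?thesis
    unfolding pstar_def
  proof (intro conjI ballI impI)
    fix i assume i: "i \<in> insert i0 I"
    show "(S(i0 := T)) i \<subseteq> H" "finite ((S(i0 := T)) i)" "card ((S(i0 := T)) i) = d i"
      using ps T i unfolding pstar_def by (cases "i = i0"; simp)+
    fix e assume "e \<in> (S(i0 := T)) i"
    then show "(c(i0 := v)) i \<in> e"
      using ps T i unfolding pstar_def by (cases "i = i0"; simp)
  next
    fix i i' assume i: "i \<in> insert i0 I" and i': "i' \<in> insert i0 I" and ne: "i \<noteq> i'"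
    show "Vx (c(i0 := v)) (S(i0 := T)) i \<inter> Vx (c(i0 := v)) (S(i0 := T)) i' = {}"
    proof (cases "i = i0")
      case True
      then have "i' \<in> I" "i' \<noteq> i0" using i' ne by auto
      then show ?thesis using True V1 V2 dj by blast
    next
      case False
      then have iI: "i \<in> I" using i by simp
      show ?thesis
      proof (cases "i' = i0")
        case True
        then show ?thesis using False iI V1 V2 dj by blast
      next
        case False
        then have "i' \<in> I" using i' by simp
        then show ?thesis using ps iI ne False \<open>i \<noteq> i0\<close> V1 unfolding pstar_def by simp
      qed
    qed
  qed
qed

definition deg :: "'a set set \<Rightarrow> 'a \<Rightarrow> nat" where
  "deg H v = card {e \<in> H. v \<in> e}"

lemma extension:
  assumes lu: "linear_uniform r V H" and finW: "finite W" and vW: "v \<notin> W"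
    and dg: "card W + m \<le> deg H v"
  shows "\<exists>T. T \<subseteq> H \<and> finite T \<and> card T = m \<and> (\<forall>e\<in>T. v \<in> e \<and> e \<inter> W = {})"
proof -
  have finH: "finite H" using lu unfolding linear_uniform_def by (meson Pow_iff finite_Pow_iff finite_subset subsetI)
  have fin_e: "\<And>e. e \<in> H \<Longrightarrow> finite e"
    using lu unfolding linear_uniform_def by (auto intro: finite_subset)
  have lin: "\<And>e1 e2. e1 \<in> H \<Longrightarrow> e2 \<in> H \<Longrightarrow> e1 \<noteq> e2 \<Longrightarrow> card (e1 \<inter> e2) \<le> 1"
    using lu unfolding linear_uniform_def by blast
  define A where "A = {e \<in> H. v \<in> e}"
  define B where "B = {e \<in> A. e \<inter> W \<noteq> {}}"
  have finA: "finite A" unfolding A_def using finH by simp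
  have one: "card {e \<in> A. w \<in> e} \<le> 1" if w: "w \<in> W" for w
  proof -
    have "\<forall>e1\<in>{e \<in> A. w \<in> e}. \<forall>e2\<in>{e \<in> A. w \<in> e}. e1 = e2"
    proof (intro ballI)
      fix e1 e2 assume e1: "e1 \<in> {e \<in> A. w \<in> e}" and e2: "e2 \<in> {e \<in> A. w \<in> e}"
      show "e1 = e2"
      proof (rule ccontr)
        assume ne: "e1 \<noteq> e2"
        have inH: "e1 \<in> H" "e2 \<in> H" using e1 e2 unfolding A_def by auto
        have "{v, w} \<subseteq> e1 \<inter> e2" using e1 e2 unfolding A_def by auto
        moreover have "card {v, w} = 2" using vW w by (cases "v = w") auto
        moreover have "finite (e1 \<inter> e2)" using fin_e inH by auto
        ultimately have "2 \<le> card (e1 \<inter> e2)" by (metis card_mono)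
        with lin[OF inH ne] show False by simp
      qed
    qed
    then show ?thesis using finA by (simp add: card_le_Suc0_iff_eq)
  qed
  have "B \<subseteq> (\<Union>w\<in>W. {e \<in> A. w \<in> e})" unfolding B_def by blast
  then have "card B \<le> card (\<Union>w\<in>W. {e \<in> A. w \<in> e})"
    by (rule card_mono[rotated]) (use finA finW in auto)
  also have "\<dots> \<le> (\<Sum>w\<in>W. card {e \<in> A. w \<in> e})" by (rule card_UN_le[OF finW])
  also have "\<dots> \<le> (\<Sum>w\<in>W. 1)" by (rule sum_mono) (use one in auto)
  finally have cB: "card B \<le> card W" by simp
  have "card A = deg H v" unfolding A_def deg_def by simp
  have "card (A - B) = card A - card B" using finA by (simp add: B_def card_Diff_subset)
  then have "m \<le> card (A - B)" using cB dg \<open>card A = deg H v\<close> by simp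
  then obtain T where T: "T \<subseteq> A - B" "card T = m" "finite T" by (meson obtain_subset_with_card_n)
  then show ?thesis unfolding A_def B_def by blast
qed


lemma lu_props:
  assumes "linear_uniform r V H"
  shows "finite V" "finite H" "\<And>e. e \<in> H \<Longrightarrow> e \<subseteq> V" "\<And>e. e \<in> H \<Longrightarrow> card e = r"
    "\<And>e. e \<in> H \<Longrightarrow> finite e"
    "\<And>e1 e2. e1 \<in> H \<Longrightarrow> e2 \<in> H \<Longrightarrow> e1 \<noteq> e2 \<Longrightarrow> card (e1 \<inter> e2) \<le> 1"
proof -
  show fV: "finite V" using assms unfolding linear_uniform_def by blast
  have "H \<subseteq> Pow V" using assms unfolding linear_uniform_def by blast
  then show "finite H" using fV by (meson finite_Pow_iff finite_subset)
  show "\<And>e. e \<in> H \<Longrightarrow> e \<subseteq> V" "\<And>e. e \<in> H \<Longrightarrow> card e = r"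
    "\<And>e1 e2. e1 \<in> H \<Longrightarrow> e2 \<in> H \<Longrightarrow> e1 \<noteq> e2 \<Longrightarrow> card (e1 \<inter> e2) \<le> 1"
    using assms unfolding linear_uniform_def by blast+
  then show "\<And>e. e \<in> H \<Longrightarrow> finite e" using fV finite_subset by blast
qed

lemma Vx_bound:
  assumes ps: "pstar H d I c S" and finI: "finite I"
    and cr: "\<And>e. e \<in> H \<Longrightarrow> card e = r" and fe: "\<And>e. e \<in> H \<Longrightarrow> finite e"
    and dM: "\<And>i. i \<in> I \<Longrightarrow> d i \<le> M"
  shows "card (\<Union>i\<in>I. Vx c S i) \<le> card I * (1 + M * r)" "finite (\<Union>i\<in>I. Vx c S i)"
proof -
  have Sp: "\<And>i. i \<in> I \<Longrightarrow> S i \<subseteq> H \<and> finite (S i) \<and> card (S i) = d i"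
    using ps unfolding pstar_def by blast
  have each: "card (Vx c S i) \<le> 1 + M * r" "finite (Vx c S i)" if i: "i \<in> I" for i
  proof -
    have "card (\<Union>(S i)) \<le> sum card (S i)" by (rule card_Union_le_sum_card)
    also have "\<dots> = (\<Sum>e\<in>S i. r)" using Sp[OF i] cr by (intro sum.cong) auto
    also have "\<dots> = d i * r" using Sp[OF i] by simp
    also have "\<dots> \<le> M * r" using dM[OF i] by simp
    finally have "card (\<Union>(S i)) \<le> M * r" .
    moreover have fU: "finite (\<Union>(S i))" using Sp[OF i] fe by auto
    moreover have "card (insert (c i) (\<Union>(S i))) \<le> Suc (card (\<Union>(S i)))"
      using fU by (simp add: card_insert_if)
    ultimately show "card (Vx c S i) \<le> 1 + M * r" unfolding Vx_def by simp
    show "finite (Vx c S i)" unfolding Vx_def using fU by auto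
  qed
  have "card (\<Union>i\<in>I. Vx c S i) \<le> (\<Sum>i\<in>I. card (Vx c S i))" by (rule card_UN_le[OF finI])
  also have "\<dots> \<le> (\<Sum>i\<in>I. 1 + M * r)" by (rule sum_mono) (use each in auto)
  also have "\<dots> = card I * (1 + M * r)" by simp
  finally show "card (\<Union>i\<in>I. Vx c S i) \<le> card I * (1 + M * r)" .
  show "finite (\<Union>i\<in>I. Vx c S i)" using finI each by auto
qed

lemma high_extend:
  assumes lu: "linear_uniform r V H" and sk: "s \<le> k"
    and cinj: "inj_on c {1..s}" and hi: "\<And>i. i \<in> {1..s} \<Longrightarrow> D \<le> deg H (c i)"
    and ps0: "pstar H d {s+1..k} c0 S0"
    and av: "\<And>i j. i \<in> {s+1..k} \<Longrightarrow> j \<in> {1..s} \<Longrightarrow> c j \<notin> Vx c0 S0 i"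
    and dM: "\<And>i. i \<in> {1..k} \<Longrightarrow> d i \<le> M"
    and DD: "s + k * (1 + M * r) + M \<le> D"
  shows "\<exists>c' S'. pstar H d {1..k} c' S'"
proof -
  note L = lu_props[OF lu]
  have claim: "\<exists>c' S'. pstar H d ({1..m} \<union> {s+1..k}) c' S' \<and>
      (\<forall>i\<in>{1..m} \<union> {s+1..k}. \<forall>j\<in>{1..s}. c j \<in> Vx c' S' i \<longrightarrow> i = j)" if "m \<le> s" for m
    using that
  proof (induction m)
    case 0
    have "\<forall>i\<in>{1..0} \<union> {s+1..k}. \<forall>j\<in>{1..s}. c j \<in> Vx c0 S0 i \<longrightarrow> i = j"
      using av by auto
    moreover have "{1..0} \<union> {s+1..k} = {s+1..k}" by simp
    ultimately show ?case using ps0 by (intro exI[of _ c0] exI[of _ S0]) simp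
  next
    case (Suc m)
    then obtain c' S' where ps: "pstar H d ({1..m} \<union> {s+1..k}) c' S'"
      and inv: "\<forall>i\<in>{1..m} \<union> {s+1..k}. \<forall>j\<in>{1..s}. c j \<in> Vx c' S' i \<longrightarrow> i = j" by auto
    define I where "I = {1..m} \<union> {s+1..k}"
    define v where "v = c (Suc m)"
    define W where "W = (\<Union>i\<in>I. Vx c' S' i) \<union> (c ` {1..s} - {v})"
    have IK: "I \<subseteq> {1..k}" unfolding I_def using Suc.prems sk by auto
    have finI: "finite I" unfolding I_def by simp
    have cI: "card I \<le> k" using card_mono[OF _ IK] by simp
    have nI: "Suc m \<notin> I" unfolding I_def using Suc.prems by auto
    have sm: "Suc m \<in> {1..s}" using Suc.prems by simp
    have VB: "card (\<Union>i\<in>I. Vx c' S' i) \<le> card I * (1 + M * r)" "finite (\<Union>i\<in>I. Vx c' S' i)"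
    proof -
      have "\<And>i. i \<in> I \<Longrightarrow> d i \<le> M" using dM IK by blast
      then show "card (\<Union>i\<in>I. Vx c' S' i) \<le> card I * (1 + M * r)" "finite (\<Union>i\<in>I. Vx c' S' i)"
        using Vx_bound[OF ps[folded I_def] finI L(4) L(5)] by blast+
    qed
    have finW: "finite W" unfolding W_def using VB by simp
    have "card W \<le> card (\<Union>i\<in>I. Vx c' S' i) + card (c ` {1..s} - {v})"
      unfolding W_def by (rule card_Un_le)
    also have "card (c ` {1..s} - {v}) \<le> s"
    proof -
      have "card (c ` {1..s} - {v}) \<le> card (c ` {1..s})" by (rule card_mono) auto
      also have "\<dots> \<le> card {1..s}" by (rule card_image_le) simp
      finally show ?thesis by simp
    qed
    finally have "card W \<le> card I * (1 + M * r) + s" using VB by linarith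
    also have "\<dots> \<le> k * (1 + M * r) + s" using mult_le_mono1[OF cI] by (simp only: add_le_mono1)
    finally have cW: "card W \<le> k * (1 + M * r) + s" .
    have vV: "v \<notin> (\<Union>i\<in>I. Vx c' S' i)"
    proof
      assume "v \<in> (\<Union>i\<in>I. Vx c' S' i)"
      then obtain i where "i \<in> I" "c (Suc m) \<in> Vx c' S' i" unfolding v_def by blast
      then have "i = Suc m" using inv sm unfolding I_def by simp
      with nI \<open>i \<in> I\<close> show False by simp
    qed
    then have vW: "v \<notin> W" unfolding W_def by blast
    have dsm: "d (Suc m) \<le> M" using dM sm sk by simp
    have "card W + d (Suc m) \<le> deg H v" using cW dsm DD hi[OF sm] unfolding v_def by linarith
    then obtain T where T: "T \<subseteq> H" "finite T" "card T = d (Suc m)" "\<forall>e\<in>T. v \<in> e \<and> e \<inter> W = {}"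
      using extension[OF lu finW vW] by blast
    have dj: "insert v (\<Union>T) \<inter> (\<Union>i\<in>I. Vx c' S' i) = {}"
    proof -
      have "(\<Union>i\<in>I. Vx c' S' i) \<subseteq> W" unfolding W_def by (rule Un_upper1)
      then have "\<forall>e\<in>T. e \<inter> (\<Union>i\<in>I. Vx c' S' i) = {}" using T(4) by blast
      then show ?thesis using vV by blast
    qed
    have ps': "pstar H d (insert (Suc m) I) (c'(Suc m := v)) (S'(Suc m := T))"
      by (rule pstar_step[OF ps[folded I_def] nI T(1-3)]) (use T(4) dj in auto)
    have eqI: "insert (Suc m) I = {1..Suc m} \<union> {s+1..k}" unfolding I_def using Suc.prems by auto
    have inv': "\<forall>i\<in>insert (Suc m) I. \<forall>j\<in>{1..s}. c j \<in> Vx (c'(Suc m := v)) (S'(Suc m := T)) i \<longrightarrow> i = j"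
    proof (intro ballI impI)
      fix i j assume i: "i \<in> insert (Suc m) I" and j: "j \<in> {1..s}"
        and cj: "c j \<in> Vx (c'(Suc m := v)) (S'(Suc m := T)) i"
      show "i = j"
      proof (cases "i = Suc m")
        case True
        then have "c j \<in> insert v (\<Union>T)" using cj unfolding Vx_def by simp
        then have "c j = v"
        proof
          assume "c j \<in> \<Union>T"
          then obtain e where "e \<in> T" "c j \<in> e" by blast
          then have "c j \<notin> W" using T(4) by blast
          then show "c j = v" unfolding W_def using j by blast
        qed
        then have "j = Suc m" using inj_onD[OF cinj _ j sm] unfolding v_def by simp
        then show ?thesis using True by simp
      next
        case False
        then have "i \<in> I" "c j \<in> Vx c' S' i" using i cj unfolding Vx_def by auto
        then show ?thesis using inv j unfolding I_def by simp
      qed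
    qed
    show ?case using ps' inv' unfolding eqI by (intro exI conjI)
  qed
  obtain c' S' where "pstar H d ({1..s} \<union> {s+1..k}) c' S'" using claim[of s] by auto
  moreover have "{1..s} \<union> {s+1..k} = {1..k}" using sk by auto
  ultimately show ?thesis by auto
qed


lemma bounded_greedy:
  assumes lu: "linear_uniform r U G"
    and mdeg: "\<And>u. u \<in> U \<Longrightarrow> deg G u < D"
    and dM: "\<And>i. i \<in> {1..k} \<Longrightarrow> d i \<le> M"
    and big: "\<And>j. j \<in> {s+1..k} \<Longrightarrow> (j - s - 1) * ((1 + M * r) * (1 + D * r)) < card {u \<in> U. d j \<le> deg G u}"
  shows "\<exists>c S. pstar G d {s+1..k} c S"
proof -
  note L = lu_props[OF lu]
  have degle: "deg G w \<le> D" for w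
  proof (cases "w \<in> U")
    case True then show ?thesis using mdeg[OF True] by simp
  next
    case False
    then have "{e \<in> G. w \<in> e} = {}" using L(3) by blast
    then show ?thesis unfolding deg_def by (simp only: card.empty)
  qed
  have claim: "\<exists>c S. pstar G d {s+1..m} c S" if "m \<le> k" for m
    using that
  proof (induction m)
    case 0
    have "pstar G d {} c S" for c S unfolding pstar_def by simp
    then show ?case by auto
  next
    case (Suc m)
    show ?case
    proof (cases "Suc m \<le> s")
      case True
      then have "{s+1..Suc m} = {}" by simp
      moreover have "pstar G d {} c S" for c S unfolding pstar_def by simp
      ultimately show ?thesis by metis
    next
      case False
      then have sm: "s + 1 \<le> Suc m" by simp
      obtain c S where ps: "pstar G d {s+1..m} c S" using Suc by auto
      define I where "I = {s+1..m}"
      define W where "W = (\<Union>i\<in>I. Vx c S i)"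
      define NW where "NW = W \<union> \<Union>{e \<in> G. e \<inter> W \<noteq> {}}"
      have IK: "I \<subseteq> {1..k}" unfolding I_def using Suc.prems by auto
      have finI: "finite I" unfolding I_def by simp
      have cI: "card I = m - s" unfolding I_def by simp
      have nI: "Suc m \<notin> I" unfolding I_def by simp
      have dI: "\<And>i. i \<in> I \<Longrightarrow> d i \<le> M" using dM IK by (meson subsetD)
      have VB: "card W \<le> card I * (1 + M * r)" "finite W"
        using Vx_bound[OF ps[folded I_def] finI L(4) L(5) dI] unfolding W_def by blast+
      have "\<Union>{e \<in> G. e \<inter> W \<noteq> {}} = (\<Union>w\<in>W. \<Union>{e \<in> G. w \<in> e})" by blast
      then have "card (\<Union>{e \<in> G. e \<inter> W \<noteq> {}}) \<le> (\<Sum>w\<in>W. card (\<Union>{e \<in> G. w \<in> e}))"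
        using card_UN_le[OF VB(2)] by simp
      also have "\<dots> \<le> (\<Sum>w\<in>W. D * r)"
      proof (rule sum_mono)
        fix w assume "w \<in> W"
        have "card (\<Union>{e \<in> G. w \<in> e}) \<le> sum card {e \<in> G. w \<in> e}" by (rule card_Union_le_sum_card)
        also have "\<dots> = (\<Sum>e\<in>{e \<in> G. w \<in> e}. r)" using L(4) by (intro sum.cong) auto
        also have "\<dots> = deg G w * r" unfolding deg_def by simp
        also have "\<dots> \<le> D * r" using degle by simp
        finally show "card (\<Union>{e \<in> G. w \<in> e}) \<le> D * r" .
      qed
      also have "\<dots> = card W * (D * r)" by simp
      finally have c1: "card (\<Union>{e \<in> G. e \<inter> W \<noteq> {}}) \<le> card W * (D * r)" .
      have "card NW \<le> card W + card W * (D * r)" unfolding NW_def using card_Un_le c1 by (meson add_left_mono le_trans)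
      also have "\<dots> = card W * (1 + D * r)" by (simp add: algebra_simps)
      also have "\<dots> \<le> (card I * (1 + M * r)) * (1 + D * r)" using VB(1) by (rule mult_le_mono1)
      also have "\<dots> = (Suc m - s - 1) * ((1 + M * r) * (1 + D * r))" using cI by (simp only: mult.assoc diff_Suc_1 Suc_diff_le) (simp add: Suc_diff_Suc)
      also have "\<dots> < card {u \<in> U. d (Suc m) \<le> deg G u}" using big[of "Suc m"] sm Suc.prems by simp
      finally have "card NW < card {u \<in> U. d (Suc m) \<le> deg G u}" .
      then obtain b where b: "b \<in> U" "d (Suc m) \<le> deg G b" "b \<notin> NW"
      proof -
        assume *: "\<And>b. b \<in> U \<Longrightarrow> d (Suc m) \<le> deg G b \<Longrightarrow> b \<notin> NW \<Longrightarrow> thesis"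
        show thesis
        proof (rule ccontr)
          assume "\<not> thesis"
          then have "{u \<in> U. d (Suc m) \<le> deg G u} \<subseteq> NW" using * by blast
          moreover have "finite NW" unfolding NW_def using VB(2) L(2) L(5) by auto
          ultimately have "card {u \<in> U. d (Suc m) \<le> deg G u} \<le> card NW" by (rule card_mono[rotated])
          with \<open>card NW < _\<close> show False by simp
        qed
      qed
      obtain T where T: "T \<subseteq> {e \<in> G. b \<in> e}" "card T = d (Suc m)" "finite T"
        using b(2) unfolding deg_def by (meson obtain_subset_with_card_n)
      have dj: "insert b (\<Union>T) \<inter> (\<Union>i\<in>I. Vx c S i) = {}"
      proof -
        have "b \<notin> W" using b(3) unfolding NW_def by blast
        moreover have "e \<inter> W = {}" if "e \<in> T" for e
        proof (rule ccontr)
          assume "e \<inter> W \<noteq> {}"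
          then have "e \<subseteq> NW" using T(1) that unfolding NW_def by blast
          moreover have "b \<in> e" using T(1) that by blast
          ultimately show False using b(3) by blast
        qed
        ultimately show ?thesis unfolding W_def by blast
      qed
      have ps': "pstar G d (insert (Suc m) I) (c(Suc m := b)) (S(Suc m := T))"
        by (rule pstar_step[OF ps[folded I_def] nI]) (use T dj in auto)
      moreover have "insert (Suc m) I = {s+1..Suc m}" unfolding I_def using sm by auto
      ultimately show ?thesis by metis
    qed
  qed
  show ?thesis using claim[of k] by simp
qed

lemma deg_sum:
  assumes lu: "linear_uniform r U G"
  shows "(\<Sum>u\<in>U. deg G u) = r * card G"
proof -
  note L = lu_props[OF lu]
  have "(\<Sum>u\<in>U. deg G u) = (\<Sum>u\<in>U. \<Sum>e\<in>G. if u \<in> e then 1 else 0)"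
    unfolding deg_def using L(2) by (simp add: sum.If_cases Int_def)
  also have "\<dots> = (\<Sum>e\<in>G. \<Sum>u\<in>U. if u \<in> e then 1 else 0)" by (rule sum.swap)
  also have "\<dots> = (\<Sum>e\<in>G. card (U \<inter> e))" using L(1) by (simp add: sum.If_cases Int_def)
  also have "\<dots> = (\<Sum>e\<in>G. r)"
  proof (rule sum.cong)
    fix e assume "e \<in> G"
    then have "U \<inter> e = e" using L(3) by blast
    then show "card (U \<inter> e) = r" using L(4) \<open>e \<in> G\<close> by simp
  qed simp
  finally show ?thesis by simp
qed


lemma real_choose2: "real (n choose 2) = real n * (real n - 1) / 2"
proof (induction n)
  case 0 then show ?case by simp
next
  case (Suc n)
  have "Suc n choose 2 = n + (n choose 2)" by (simp add: numeral_2_eq_2)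
  then show ?case using Suc by (simp add: field_simps)
qed

lemma per_edge_ineq:
  fixes x R :: real
  assumes "1 \<le> x" "x \<le> R" "2 \<le> R"
  shows "1 \<le> x * (R - x) / (R - 1) + (x * (x - 1) / 2) / (R * (R - 1) / 2)"
proof -
  have id: "R * x * (R - x) + x * (x - 1) = R * (R - 1) + (R - 1) * (x - 1) * (R - x)" by (simp add: algebra_simps)
  have "0 \<le> (R - 1) * (x - 1) * (R - x)" using assms by simp
  then have le: "R * (R - 1) \<le> R * x * (R - x) + x * (x - 1)" using id by linarith
  have pos: "0 < R * (R - 1)" using assms by simp
  have R0: "R \<noteq> 0" "R - 1 \<noteq> 0" using assms by auto
  have e1: "x * (R - x) / (R - 1) = (R * x * (R - x)) / (R * (R - 1))" using R0 by simp
  have e2: "(x * (x - 1) / 2) / (R * (R - 1) / 2) = x * (x - 1) / (R * (R - 1))" by simp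
  have "x * (R - x) / (R - 1) + (x * (x - 1) / 2) / (R * (R - 1) / 2) = (R * x * (R - x) + x * (x - 1)) / (R * (R - 1))"
    unfolding e1 e2 by (simp add: add_divide_distrib)
  also have "\<dots> \<ge> 1" using le pos by simp
  finally show ?thesis by simp
qed

lemma hs_bound:
  assumes lu: "linear_uniform r V H" and r2: "r \<ge> 2" and SV: "S \<subseteq> V"
  shows "real (card {e \<in> H. e \<inter> S \<noteq> {}}) \<le>
    real (card S) * real (card V - card S) / (real r - 1) + real (card S choose 2) / real (r choose 2)"
proof -
  note L = lu_props[OF lu]
  define HS where "HS = {e \<in> H. e \<inter> S \<noteq> {}}"
  have finHS: "finite HS" unfolding HS_def using L(2) by simp
  have finS: "finite S" using SV L(1) finite_subset by blast
  have same: "e = e'" if "e \<in> HS" "e' \<in> HS" "x \<in> e" "x \<in> e'" "y \<in> e" "y \<in> e'" "x \<noteq> y" for e e' x y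
  proof (rule ccontr)
    assume ne: "e \<noteq> e'"
    have inH: "e \<in> H" "e' \<in> H" using that unfolding HS_def by auto
    have "{x, y} \<subseteq> e \<inter> e'" using that by auto
    moreover have "card {x, y} = 2" using that by simp
    moreover have "finite (e \<inter> e')" using L(5) inH by auto
    ultimately have "2 \<le> card (e \<inter> e')" by (metis card_mono)
    with L(6)[OF inH ne] show False by simp
  qed
  define P where "P = (\<lambda>e. (e \<inter> S) \<times> (e - S))"
  define Q where "Q = (\<lambda>e. {B. B \<subseteq> e \<inter> S \<and> card B = 2})"
  have sumA: "(\<Sum>e\<in>HS. card (e \<inter> S) * card (e - S)) \<le> card S * (card V - card S)"
  proof -
    have "(\<Sum>e\<in>HS. card (e \<inter> S) * card (e - S)) = (\<Sum>e\<in>HS. card (P e))"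
      unfolding P_def by (simp add: card_cartesian_product)
    also have "\<dots> = card (\<Union>e\<in>HS. P e)"
    proof (rule card_UN_disjoint[symmetric, OF finHS])
      show "\<forall>e\<in>HS. finite (P e)" unfolding P_def HS_def using L(5) by auto
      show "\<forall>e\<in>HS. \<forall>e'\<in>HS. e \<noteq> e' \<longrightarrow> P e \<inter> P e' = {}"
      proof (intro ballI impI)
        fix e e' assume e: "e \<in> HS" and e': "e' \<in> HS" and ne: "e \<noteq> e'"
        show "P e \<inter> P e' = {}"
        proof (rule ccontr)
          assume "P e \<inter> P e' \<noteq> {}"
          then obtain x y where "x \<in> e" "x \<in> e'" "y \<in> e" "y \<in> e'" "x \<in> S" "y \<notin> S"
            unfolding P_def by blast
          then have "e = e'" using same[OF e e'] by metis
          with ne show False by simp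
        qed
      qed
    qed
    also have "\<dots> \<le> card (S \<times> (V - S))"
    proof (rule card_mono)
      show "finite (S \<times> (V - S))" using finS L(1) by simp
      show "(\<Union>e\<in>HS. P e) \<subseteq> S \<times> (V - S)" unfolding P_def HS_def using L(3) by blast
    qed
    also have "\<dots> = card S * (card V - card S)"
      using finS SV by (simp add: card_cartesian_product card_Diff_subset)
    finally show ?thesis .
  qed
  have sumB: "(\<Sum>e\<in>HS. card (e \<inter> S) choose 2) \<le> card S choose 2"
  proof -
    have "(\<Sum>e\<in>HS. card (e \<inter> S) choose 2) = (\<Sum>e\<in>HS. card (Q e))"
    proof (rule sum.cong)
      fix e assume "e \<in> HS"
      then have "finite (e \<inter> S)" using L(5) unfolding HS_def by auto
      then show "card (e \<inter> S) choose 2 = card (Q e)" unfolding Q_def by (rule n_subsets[symmetric])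
    qed simp
    also have "\<dots> = card (\<Union>e\<in>HS. Q e)"
    proof (rule card_UN_disjoint[symmetric, OF finHS])
      show "\<forall>e\<in>HS. finite (Q e)" unfolding Q_def HS_def using L(5) by auto
      show "\<forall>e\<in>HS. \<forall>e'\<in>HS. e \<noteq> e' \<longrightarrow> Q e \<inter> Q e' = {}"
      proof (intro ballI impI)
        fix e e' assume e: "e \<in> HS" and e': "e' \<in> HS" and ne: "e \<noteq> e'"
        show "Q e \<inter> Q e' = {}"
        proof (rule ccontr)
          assume "Q e \<inter> Q e' \<noteq> {}"
          then obtain B where B: "B \<subseteq> e" "B \<subseteq> e'" "card B = 2" unfolding Q_def by blast
          then obtain x y where "B = {x, y}" "x \<noteq> y" by (meson card_2_iff)
          then have "e = e'" using same[OF e e'] B by auto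
          with ne show False by simp
        qed
      qed
    qed
    also have "\<dots> \<le> card {B. B \<subseteq> S \<and> card B = 2}"
    proof (rule card_mono)
      show "finite {B. B \<subseteq> S \<and> card B = 2}" using finS by simp
      show "(\<Union>e\<in>HS. Q e) \<subseteq> {B. B \<subseteq> S \<and> card B = 2}" unfolding Q_def by blast
    qed
    also have "\<dots> = card S choose 2" using finS by (simp add: n_subsets)
    finally show ?thesis .
  qed
  have rpos: "real r - 1 > 0" "real (r choose 2) > 0" using r2 by (auto simp: real_choose2)
  have each: "1 \<le> real (card (e \<inter> S) * card (e - S)) / (real r - 1) + real (card (e \<inter> S) choose 2) / real (r choose 2)"
    if e: "e \<in> HS" for e
  proof -
    have eH: "e \<in> H" and ne: "e \<inter> S \<noteq> {}" using e unfolding HS_def by auto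
    have fe: "finite e" using L(5) eH by simp
    have j1: "1 \<le> card (e \<inter> S)" using ne fe by (simp add: Suc_le_eq card_gt_0_iff)
    have jr: "card (e \<inter> S) \<le> r" using L(4)[OF eH] fe by (metis Int_lower1 card_mono)
    have cd: "card (e - S) = r - card (e \<inter> S)"
      using L(4)[OF eH] fe by (metis card_Diff_subset_Int finite_Int Int_lower1 Diff_Int2 Int_commute Diff_Int_distrib2 inf.idem card_Diff_subset)
    have "real (card (e - S)) = real r - real (card (e \<inter> S))" using cd jr by simp
    then show ?thesis
      using per_edge_ineq[of "real (card (e \<inter> S))" "real r"] j1 jr r2
      by (simp add: real_choose2)
  qed
  have "real (card HS) = (\<Sum>e\<in>HS. 1)" by simp
  also have "\<dots> \<le> (\<Sum>e\<in>HS. real (card (e \<inter> S) * card (e - S)) / (real r - 1) + real (card (e \<inter> S) choose 2) / real (r choose 2))"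
    by (rule sum_mono) (rule each)
  also have "\<dots> = real (\<Sum>e\<in>HS. card (e \<inter> S) * card (e - S)) / (real r - 1) + real (\<Sum>e\<in>HS. card (e \<inter> S) choose 2) / real (r choose 2)"
    by (simp add: sum.distrib sum_divide_distrib)
  also have "\<dots> \<le> real (card S * (card V - card S)) / (real r - 1) + real (card S choose 2) / real (r choose 2)"
  proof (rule add_mono)
    show "real (\<Sum>e\<in>HS. card (e \<inter> S) * card (e - S)) / (real r - 1) \<le> real (card S * (card V - card S)) / (real r - 1)"
    proof (rule divide_right_mono)
      show "real (\<Sum>e\<in>HS. card (e \<inter> S) * card (e - S)) \<le> real (card S * (card V - card S))"
        using sumA by (simp only: of_nat_le_iff)
    qed (use rpos in simp)
    show "real (\<Sum>e\<in>HS. card (e \<inter> S) choose 2) / real (r choose 2) \<le> real (card S choose 2) / real (r choose 2)"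
    proof (rule divide_right_mono)
      show "real (\<Sum>e\<in>HS. card (e \<inter> S) choose 2) \<le> real (card S choose 2)"
        using sumB by (simp only: of_nat_le_iff)
    qed (use rpos in simp)
  qed
  finally show ?thesis unfolding HS_def by simp
qed


lemma final_ineq:
  fixes a \<delta> N dd R X :: real
  assumes "\<delta> = 0 \<or> \<delta> \<ge> 1" "a \<ge> 0" "dd \<ge> 0" "X \<ge> 0" "R \<ge> 2" "N \<ge> 2 * a + \<delta> + dd + X"
  shows "a * (N - a) / (R - 1) + a * (a - 1) / (R * (R - 1)) + (dd * (N - a) + X * \<delta>) / R
     \<le> (dd / R + (a + \<delta>) / (R - 1)) * (N - (a + \<delta>)) + (a + \<delta>) * (a + \<delta> - 1) / (R * (R - 1))"
proof -
  have R0: "R \<noteq> 0" "R - 1 \<noteq> 0" "R > 0" "R - 1 > 0" using assms by auto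
  have id: "((dd / R + (a + \<delta>) / (R - 1)) * (N - (a + \<delta>)) + (a + \<delta>) * (a + \<delta> - 1) / (R * (R - 1)))
     - (a * (N - a) / (R - 1) + a * (a - 1) / (R * (R - 1)) + (dd * (N - a) + X * \<delta>) / R)
     = \<delta> * ((N - 2 * a - \<delta>) / (R - 1) + (2 * a + \<delta> - 1) / (R * (R - 1)) - (dd + X) / R)"
  proof -
    have "inverse (R * (R - 1)) = inverse R * inverse (R - 1)" by (simp add: inverse_mult_distrib)
    then show ?thesis unfolding divide_inverse by (simp add: algebra_simps)
  qed
  have t1: "(dd + X) / R \<le> (dd + X) / (R - 1)" using R0 assms by (intro divide_left_mono) auto
  have t2: "(dd + X) / (R - 1) \<le> (N - 2 * a - \<delta>) / (R - 1)" using R0 assms by (intro divide_right_mono) auto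
  have t3: "\<delta> * ((2 * a + \<delta> - 1) / (R * (R - 1))) \<ge> 0"
    using assms R0 by (auto intro!: divide_nonneg_pos)
  have "\<delta> * ((N - 2 * a - \<delta>) / (R - 1) - (dd + X) / R) \<ge> 0" using t1 t2 assms by auto
  then have "\<delta> * ((N - 2 * a - \<delta>) / (R - 1) + (2 * a + \<delta> - 1) / (R * (R - 1)) - (dd + X) / R) \<ge> 0"
    using t3 by (simp add: algebra_simps)
  then show ?thesis using id by linarith
qed

lemma pstar_mono: "pstar G d I c S \<Longrightarrow> G \<subseteq> H \<Longrightarrow> pstar H d I c S"
proof -
  assume a: "pstar G d I c S" "G \<subseteq> H"
  have "\<forall>i\<in>I. S i \<subseteq> H" using a unfolding pstar_def by auto
  then show ?thesis using a(1) unfolding pstar_def by simp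
qed

lemma upper_main:
  fixes H :: "'a set set" and d :: "nat \<Rightarrow> nat"
  assumes k1: "k \<ge> 1" and r2: "r \<ge> 2"
    and dpos: "\<And>i. 1 \<le> i \<Longrightarrow> i \<le> k \<Longrightarrow> d i \<ge> 1"
    and dmono: "\<And>i j. 1 \<le> i \<Longrightarrow> i \<le> j \<Longrightarrow> j \<le> k \<Longrightarrow> d j \<le> d i"
    and lu: "linear_uniform r V H"
    and nf: "\<not> (\<exists>c S. pstar H d {1..k} c S)"
    and nN: "2 * k + d 1 + ((1 + d 1 * r) * (1 + (k + k * (1 + d 1 * r) + d 1) * r)) * (k + k * (1 + d 1 * r) + d 1) \<le> card V"
  shows "\<exists>j\<in>{1..k}. real (card H) \<le> ((real (d j) - 1) / real r + (real j - 1) / (real r - 1))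
                        * (real (card V) - real j + 1)
                      + real ((j - 1) choose 2) / real (r choose 2)"
proof -
  note L = lu_props[OF lu]
  define M where "M = d 1"
  define D where "D = k + k * (1 + M * r) + M"
  define K where "K = (1 + M * r) * (1 + D * r)"
  define n where "n = card V"
  have nN': "2 * k + M + K * D \<le> n" using nN unfolding M_def D_def K_def n_def by simp
  have dM: "\<And>i. i \<in> {1..k} \<Longrightarrow> d i \<le> M" unfolding M_def using dmono k1 by auto
  define S where "S = {v \<in> V. D \<le> deg H v}"
  define s where "s = card S"
  have SV: "S \<subseteq> V" unfolding S_def by auto
  have finS: "finite S" using SV L(1) finite_subset by blast
  have sk: "s < k"
  proof (rule ccontr)
    assume "\<not> s < k"
    then have "card {1..k} \<le> card S" unfolding s_def by simp
    then obtain c where c: "c ` {1..k} \<subseteq> S" "inj_on c {1..k}"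
      using card_le_inj[OF _ finS] by blast
    have ps0: "pstar H d {k+1..k} c c'" for c' unfolding pstar_def by simp
    have "\<exists>c' S'. pstar H d {1..k} c' S'"
    proof (rule high_extend[OF lu order_refl c(2) _ ps0])
      show "\<And>i. i \<in> {1..k} \<Longrightarrow> D \<le> deg H (c i)" using c(1) unfolding S_def by blast
      show "\<And>i j. i \<in> {k+1..k} \<Longrightarrow> j \<in> {1..k} \<Longrightarrow> c j \<notin> Vx c c' i" by simp
      show "\<And>i. i \<in> {1..k} \<Longrightarrow> d i \<le> M" by (rule dM)
      show "k + k * (1 + M * r) + M \<le> D" unfolding D_def by simp
    qed
    with nf show False by blast
  qed
  define G where "G = {e \<in> H. e \<inter> S = {}}"
  define HS where "HS = {e \<in> H. e \<inter> S \<noteq> {}}"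
  have GH: "G \<subseteq> H" unfolding G_def by auto
  have luG: "linear_uniform r (V - S) G"
    using lu unfolding linear_uniform_def G_def by (auto simp: L(1))
  note LG = lu_props[OF luG]
  have nG: "\<not> (\<exists>c S. pstar G d {s+1..k} c S)"
  proof
    assume "\<exists>c S. pstar G d {s+1..k} c S"
    then obtain c0 S0 where ps0: "pstar G d {s+1..k} c0 S0" by blast
    obtain c where c: "bij_betw c {1..s} S" unfolding s_def using ex_bij_betw_nat_finite_1[OF finS] by blast
    have "\<exists>c' S'. pstar H d {1..k} c' S'"
    proof (rule high_extend[OF lu _ _ _ pstar_mono[OF ps0 GH]])
      show "s \<le> k" using sk by simp
      show "inj_on c {1..s}" using c bij_betw_def by blast
      show "\<And>i. i \<in> {1..s} \<Longrightarrow> D \<le> deg H (c i)" using bij_betwE[OF c] unfolding S_def by blast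
      show "\<And>i j. i \<in> {s+1..k} \<Longrightarrow> j \<in> {1..s} \<Longrightarrow> c j \<notin> Vx c0 S0 i"
      proof -
        fix i j assume i: "i \<in> {s+1..k}" and j: "j \<in> {1..s}"
        have cjS: "c j \<in> S" using bij_betwE[OF c] j by blast
        have Sp: "S0 i \<subseteq> G" "card (S0 i) = d i" "\<forall>e\<in>S0 i. c0 i \<in> e" "finite (S0 i)"
          using ps0 i unfolding pstar_def by auto
        have "d i \<ge> 1" using dpos i by auto
        then obtain e0 where e0: "e0 \<in> S0 i" using Sp(2) by (metis card.empty ex_in_conv not_one_le_zero)
        have "Vx c0 S0 i \<subseteq> \<Union>G" unfolding Vx_def using Sp(1,3) e0 by blast
        moreover have "c j \<notin> \<Union>G" using cjS unfolding G_def by blast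
        ultimately show "c j \<notin> Vx c0 S0 i" by blast
      qed
      show "\<And>i. i \<in> {1..k} \<Longrightarrow> d i \<le> M" by (rule dM)
      show "s + k * (1 + M * r) + M \<le> D" unfolding D_def using sk by simp
    qed
    with nf show False by blast
  qed
  have mdeg: "deg G u < D" if "u \<in> V - S" for u
  proof -
    have "deg G u \<le> deg H u" unfolding deg_def by (rule card_mono) (use L(2) GH in auto)
    also have "deg H u < D" using that unfolding S_def by auto
    finally show ?thesis .
  qed
  obtain j where j: "j \<in> {s+1..k}" and cB: "card {u \<in> V - S. d j \<le> deg G u} \<le> (j - s - 1) * K"
  proof -
    have "\<not> (\<forall>j. j \<in> {s+1..k} \<longrightarrow> (j - s - 1) * ((1 + M * r) * (1 + D * r)) < card {u \<in> V - S. d j \<le> deg G u})"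
      using bounded_greedy[where U="V - S" and G=G and D=D and d=d and k=k and M=M and s=s and r=r, OF luG mdeg dM] nG
      by blast
    then show ?thesis using that unfolding K_def by (meson not_le)
  qed
  define B where "B = {u \<in> V - S. d j \<le> deg G u}"
  have jk: "j \<in> {1..k}" using j by auto
  have dj1: "d j \<ge> 1" using dpos jk by auto
  have "r * card G = (\<Sum>u\<in>V - S. deg G u)" using deg_sum[OF luG] by simp
  also have "\<dots> \<le> (\<Sum>u\<in>V - S. (d j - 1) + (if u \<in> B then D else 0))"
  proof (rule sum_mono)
    fix u assume u: "u \<in> V - S"
    show "deg G u \<le> (d j - 1) + (if u \<in> B then D else 0)"
    proof (cases "u \<in> B")
      case True then show ?thesis using mdeg[OF u] by simp
    next
      case False then have "deg G u < d j" unfolding B_def using u by auto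
      then show ?thesis using False by simp
    qed
  qed
  also have "\<dots> = (d j - 1) * card (V - S) + D * card B"
  proof -
    have "B \<subseteq> V - S" unfolding B_def by auto
    then have "(\<Sum>u\<in>V - S. (if u \<in> B then D else 0)) = D * card B"
      using L(1) by (simp add: sum.If_cases Int_absorb1)
    then show ?thesis by (simp add: sum.distrib)
  qed
  also have "\<dots> \<le> (d j - 1) * (n - s) + D * ((j - s - 1) * K)"
    using cB SV finS unfolding B_def n_def s_def by (simp add: card_Diff_subset)
  finally have rG: "r * card G \<le> (d j - 1) * (n - s) + D * ((j - s - 1) * K)" .
  have HU: "H = HS \<union> G" "HS \<inter> G = {}" unfolding HS_def G_def by auto
  have cH: "card H = card HS + card G"
    using HU L(2) by (metis card_Un_disjoint finite_Un)
  have hs: "real (card HS) \<le> real s * real (n - s) / (real r - 1) + real (s choose 2) / real (r choose 2)"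
    using hs_bound[OF lu r2 SV] unfolding HS_def s_def n_def by simp
  have rG': "real (card G) \<le> (real (d j - 1) * real (n - s) + real (D * K) * real (j - s - 1)) / real r"
  proof -
    have "real r * real (card G) \<le> real (d j - 1) * real (n - s) + real (D * K) * real (j - s - 1)"
      using rG by (metis (mono_tags, lifting) of_nat_add of_nat_le_iff of_nat_mult mult.assoc mult.commute)
    then show ?thesis using r2 by (simp add: field_simps)
  qed
  have sn: "s \<le> n" using card_mono[OF L(1) SV] unfolding s_def n_def .
  have j1: "1 \<le> j" "s + 1 \<le> j" "j \<le> k" using j by auto
  have key: "real s * (real n - real s) / (real r - 1) + real s * (real s - 1) / (real r * (real r - 1))
      + (real (d j - 1) * (real n - real s) + real (D * K) * real (j - s - 1)) / real r
     \<le> (real (d j - 1) / real r + (real s + real (j - s - 1)) / (real r - 1)) * (real n - (real s + real (j - s - 1)))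
      + (real s + real (j - s - 1)) * (real s + real (j - s - 1) - 1) / (real r * (real r - 1))"
  proof (rule final_ineq)
    show "real (j - s - 1) = 0 \<or> real (j - s - 1) \<ge> 1" by (cases "j - s - 1") auto
    show "real r \<ge> 2" using r2 by simp
    have "2 * s + (j - s - 1) + (d j - 1) + D * K \<le> n"
      using nN' j1 sk dM[OF jk] by (simp add: mult.commute)
    then show "real n \<ge> 2 * real s + real (j - s - 1) + real (d j - 1) + real (D * K)"
      by (metis (mono_tags, opaque_lifting) of_nat_add of_nat_le_iff of_nat_mult of_nat_numeral)
  qed auto
  have e1: "real s + real (j - s - 1) = real j - 1" using j1 by simp
  have e2: "real (d j - 1) = real (d j) - 1" using dj1 by simp
  have e3: "real ((j - 1) choose 2) = (real j - 1) * (real j - 1 - 1) / 2" using j1 by (simp add: real_choose2)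
  have e4: "real (s choose 2) = real s * (real s - 1) / 2" by (simp add: real_choose2)
  have e5: "real (r choose 2) = real r * (real r - 1) / 2" by (simp add: real_choose2)
  have "real (card H) \<le> real s * real (n - s) / (real r - 1) + real (s choose 2) / real (r choose 2)
       + (real (d j - 1) * real (n - s) + real (D * K) * real (j - s - 1)) / real r"
    using cH hs rG' by simp
  also have "\<dots> = real s * (real n - real s) / (real r - 1) + real s * (real s - 1) / (real r * (real r - 1))
      + (real (d j - 1) * (real n - real s) + real (D * K) * real (j - s - 1)) / real r"
    using sn unfolding e4 e5 by (simp add: of_nat_diff)
  also have "\<dots> \<le> ((real (d j) - 1) / real r + (real j - 1) / (real r - 1)) * (real n - real j + 1)
      + real ((j - 1) choose 2) / real (r choose 2)"
  proof -
    have e35: "real ((j - 1) choose 2) / real (r choose 2) = (real j - 1) * (real j - 1 - 1) / (real r * (real r - 1))"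
      unfolding e3 e5 by simp
    have e6: "real n - (real j - 1) = real n - real j + 1" by simp
    show ?thesis using key unfolding e1 e2 e35 e6 .
  qed
  finally show ?thesis using jk unfolding n_def by blast
qed


lemma line_lemma:
  fixes p a a' b b' t t' :: nat
  assumes p: "prime p" and lt: "a < p" "a' < p" "b < p" "b' < p" "t < p" "t' < p" and tt: "t \<noteq> t'"
    and e1: "(a + t * b) mod p = (a' + t * b') mod p"
    and e2: "(a + t' * b) mod p = (a' + t' * b') mod p"
  shows "a = a' \<and> b = b'"
proof -
  have pi: "prime (int p)" using p by simp
  have d1: "int p dvd (int a + int t * int b) - (int a' + int t * int b')"
    using e1 by (metis mod_eq_dvd_iff of_nat_add of_nat_mult zmod_int)
  have d2: "int p dvd (int a + int t' * int b) - (int a' + int t' * int b')"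
    using e2 by (metis mod_eq_dvd_iff of_nat_add of_nat_mult zmod_int)
  have "int p dvd ((int a + int t * int b) - (int a' + int t * int b')) - ((int a + int t' * int b) - (int a' + int t' * int b'))"
    using d1 d2 by (rule dvd_diff)
  moreover have "((int a + int t * int b) - (int a' + int t * int b')) - ((int a + int t' * int b) - (int a' + int t' * int b'))
     = (int t - int t') * (int b - int b')" by (simp add: algebra_simps)
  ultimately have "int p dvd (int t - int t') * (int b - int b')" by simp
  then have "int p dvd (int t - int t') \<or> int p dvd (int b - int b')" using pi prime_dvd_mult_iff by blast
  moreover have "\<not> int p dvd (int t - int t')"
  proof
    assume "int p dvd (int t - int t')"
    moreover have "int t - int t' \<noteq> 0" using tt by simp
    ultimately have "\<bar>int p\<bar> \<le> \<bar>int t - int t'\<bar>" using dvd_imp_le_int by blast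
    then show False using lt by simp
  qed
  ultimately have db: "int p dvd (int b - int b')" by simp
  have bb: "b = b'"
  proof (rule ccontr)
    assume "b \<noteq> b'"
    then have "int b - int b' \<noteq> 0" by simp
    then have "\<bar>int p\<bar> \<le> \<bar>int b - int b'\<bar>" using dvd_imp_le_int db by blast
    then show False using lt by simp
  qed
  then have "int p dvd int a - int a'" using d1 by simp
  moreover have "a = a'"
  proof (rule ccontr)
    assume "a \<noteq> a'"
    then have "int a - int a' \<noteq> 0" by simp
    then have "\<bar>int p\<bar> \<le> \<bar>int a - int a'\<bar>" using dvd_imp_le_int \<open>int p dvd int a - int a'\<close> by blast
    then show False using lt by simp
  qed
  ultimately show ?thesis using bb by simp
qed

lemma slope_lemma:
  fixes p a a' b t :: nat
  assumes lt: "a < p" "a' < p" and e: "(a + t * b) mod p = (a' + t * b) mod p"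
  shows "a = a'"
proof -
  have "int p dvd (int a + int t * int b) - (int a' + int t * int b)"
    using e by (metis mod_eq_dvd_iff of_nat_add of_nat_mult zmod_int)
  then have d: "int p dvd int a - int a'" by simp
  show ?thesis
  proof (rule ccontr)
    assume "a \<noteq> a'"
    then have "int a - int a' \<noteq> 0" by simp
    then have "\<bar>int p\<bar> \<le> \<bar>int a - int a'\<bar>" using dvd_imp_le_int d by blast
    then show False using lt by simp
  qed
qed

type_synonym vtx = "nat + nat \<times> nat \<times> nat"

definition pt :: "nat \<Rightarrow> nat \<Rightarrow> nat \<Rightarrow> nat \<Rightarrow> nat \<Rightarrow> vtx" where
  "pt p b a z t = Inr (z, t, (a + t * b) mod p)"

definition chunk :: "nat \<Rightarrow> nat \<Rightarrow> nat \<Rightarrow> nat \<Rightarrow> nat \<Rightarrow> nat \<Rightarrow> vtx set" where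
  "chunk p b a z w c = pt p b a z ` {c * w ..< c * w + w}"

lemma pt_eq: "pt p b a z t = pt p b' a' z' t' \<longleftrightarrow> z = z' \<and> t = t' \<and> (a + t * b) mod p = (a' + t' * b') mod p"
  unfolding pt_def by auto

lemma chunk_mem: "x \<in> chunk p b a z w c \<longleftrightarrow> (\<exists>t. c * w \<le> t \<and> t < c * w + w \<and> x = pt p b a z t)"
  unfolding chunk_def by auto

lemma Inl_notin_chunk: "Inl h \<notin> chunk p b a z w c"
  unfolding chunk_def pt_def by auto

lemma card_chunk: "card (chunk p b a z w c) = w"
proof -
  have "inj_on (pt p b a z) {c * w ..< c * w + w}" by (rule inj_onI) (simp add: pt_eq)
  then show ?thesis unfolding chunk_def by (simp add: card_image)
qed

lemma chunk_inter:
  assumes p: "prime p" and lt: "a < p" "a' < p" "b < p" "b' < p"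
    and bd: "c * w + w \<le> p" "c' * w' + w' \<le> p"
    and x: "x \<in> chunk p b a z w c" "x \<in> chunk p b' a' z' w' c'"
    and y: "y \<in> chunk p b a z w c" "y \<in> chunk p b' a' z' w' c'" and xy: "x \<noteq> y"
  shows "b = b' \<and> a = a' \<and> z = z'"
proof -
  obtain t1 where t1: "c * w \<le> t1" "t1 < c * w + w" "x = pt p b a z t1" using x(1) chunk_mem by metis
  obtain t1' where t1': "c' * w' \<le> t1'" "t1' < c' * w' + w'" "x = pt p b' a' z' t1'" using x(2) chunk_mem by metis
  obtain t2 where t2: "c * w \<le> t2" "t2 < c * w + w" "y = pt p b a z t2" using y(1) chunk_mem by metis
  obtain t2' where t2': "c' * w' \<le> t2'" "t2' < c' * w' + w'" "y = pt p b' a' z' t2'" using y(2) chunk_mem by metis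
  have A: "z = z'" "t1 = t1'" "(a + t1 * b) mod p = (a' + t1 * b') mod p" using t1(3) t1'(3) pt_eq by auto
  have B: "t2 = t2'" "(a + t2 * b) mod p = (a' + t2 * b') mod p" using t2(3) t2'(3) pt_eq by auto
  have "t1 \<noteq> t2" using xy t1(3) t2(3) by auto
  moreover have "t1 < p" "t2 < p" using t1 t2 bd by auto
  ultimately have "a = a' \<and> b = b'" using line_lemma[OF p lt] A(3) B(2) by blast
  then show ?thesis using A(1) by simp
qed

lemma chunk_same:
  assumes lt: "a < p" "a' < p"
    and x: "x \<in> chunk p b a z w c" "x \<in> chunk p b a' z' w' c'"
  shows "a = a' \<and> z = z'"
proof -
  obtain t1 where t1: "x = pt p b a z t1" using x(1) chunk_mem by metis
  obtain t1' where t1': "x = pt p b a' z' t1'" using x(2) chunk_mem by metis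
  have A: "z = z'" "t1 = t1'" "(a + t1 * b) mod p = (a' + t1 * b) mod p" using t1 t1' pt_eq by auto
  then show ?thesis using slope_lemma[OF lt] by blast
qed

lemma chunk_eq:
  assumes x: "x \<in> chunk p b a z w c" "x \<in> chunk p b a z w c'"
  shows "c = c'"
proof -
  obtain t where t: "c * w \<le> t" "t < c * w + w" "x = pt p b a z t" using x(1) chunk_mem by metis
  obtain t' where t': "c' * w \<le> t'" "t' < c' * w + w" "x = pt p b a z t'" using x(2) chunk_mem by metis
  have tt: "t = t'" using t(3) t'(3) pt_eq by auto
  have "\<not> c < c'"
  proof
    assume "c < c'"
    then have "Suc c * w \<le> c' * w" by (intro mult_le_mono1) simp
    then show False using t t' tt by simp
  qed
  moreover have "\<not> c' < c"
  proof
    assume "c' < c"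
    then have "Suc c' * w \<le> c * w" by (intro mult_le_mono1) simp
    then show False using t t' tt by simp
  qed
  ultimately show ?thesis by simp
qed

definition Pen :: "nat \<Rightarrow> nat \<Rightarrow> nat \<Rightarrow> nat \<Rightarrow> vtx set set" where
  "Pen p q Z r = (\<lambda>(h,a,z,c). insert (Inl h) (chunk p h a z (r-1) c)) ` ({..<q} \<times> {..<p} \<times> {..<Z} \<times> {..<r})"

definition Low :: "nat \<Rightarrow> nat \<Rightarrow> nat \<Rightarrow> nat \<Rightarrow> nat \<Rightarrow> vtx set set" where
  "Low p q L Z r = (\<lambda>(l,a,z,c). chunk p (q+l) a z r c) ` ({..<L} \<times> {..<p} \<times> {..<Z} \<times> {..<r-1})"

definition Vc :: "nat \<Rightarrow> nat \<Rightarrow> nat \<Rightarrow> nat \<Rightarrow> vtx set" where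
  "Vc p q Z r = Inl ` {..<q} \<union> Inr ` ({..<Z} \<times> {..<r*(r-1)} \<times> {..<p})"

lemma Pen_mem: "e \<in> Pen p q Z r \<longleftrightarrow> (\<exists>h a z c. h < q \<and> a < p \<and> z < Z \<and> c < r \<and> e = insert (Inl h) (chunk p h a z (r-1) c))"
  unfolding Pen_def by force

lemma Low_mem: "e \<in> Low p q L Z r \<longleftrightarrow> (\<exists>l a z c. l < L \<and> a < p \<and> z < Z \<and> c < r - 1 \<and> e = chunk p (q+l) a z r c)"
  unfolding Low_def by force

lemma bdP: "(c::nat) < r \<Longrightarrow> c * (r - 1) + (r - 1) \<le> r * (r - 1)"
proof -
  assume "c < r"
  then have "Suc c * (r - 1) \<le> r * (r - 1)" by (intro mult_le_mono1) simp
  then show ?thesis by simp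
qed

lemma bdL: "(c::nat) < r - 1 \<Longrightarrow> c * r + r \<le> r * (r - 1)"
proof -
  assume "c < r - 1"
  then have "Suc c * r \<le> (r - 1) * r" by (intro mult_le_mono1) simp
  then show ?thesis by (simp add: mult.commute)
qed

lemma PP_lin:
  assumes p: "prime p" and lt: "a < p" "a' < p" "h < p" "h' < p"
    and bd: "c * (r-1) + (r-1) \<le> p" "c' * (r-1) + (r-1) \<le> p"
    and x: "x \<in> insert (Inl h) (chunk p h a z (r-1) c)" "x \<in> insert (Inl h') (chunk p h' a' z' (r-1) c')"
    and y: "y \<in> insert (Inl h) (chunk p h a z (r-1) c)" "y \<in> insert (Inl h') (chunk p h' a' z' (r-1) c')"
    and xy: "x \<noteq> y"
  shows "insert (Inl h) (chunk p h a z (r-1) c) = insert (Inl h') (chunk p h' a' z' (r-1) c')"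
proof -
  define C1 where "C1 = chunk p h a z (r-1) c"
  define C2 where "C2 = chunk p h' a' z' (r-1) c'"
  have cls: "(v = Inl h \<and> v = Inl h') \<or> (v \<in> C1 \<and> v \<in> C2)" if "v \<in> insert (Inl h) C1" "v \<in> insert (Inl h') C2" for v
    using that Inl_notin_chunk unfolding C1_def C2_def by blast
  have "h = h' \<and> (\<exists>u. u \<in> C1 \<and> u \<in> C2)"
  proof (cases "x \<in> C1 \<and> x \<in> C2 \<and> y \<in> C1 \<and> y \<in> C2")
    case True
    then have "h = h'" using chunk_inter[OF p lt(1,2,3,4) bd, of x z z' y] xy unfolding C1_def C2_def by blast
    then show ?thesis using True by blast
  next
    case False
    then have "(x = Inl h \<and> x = Inl h') \<or> (y = Inl h \<and> y = Inl h')"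
      using cls x y unfolding C1_def C2_def by blast
    then show ?thesis
    proof
      assume xi: "x = Inl h \<and> x = Inl h'"
      then have "y \<in> C1 \<and> y \<in> C2" using cls y xy unfolding C1_def C2_def by blast
      then show ?thesis using xi by blast
    next
      assume yi: "y = Inl h \<and> y = Inl h'"
      then have "x \<in> C1 \<and> x \<in> C2" using cls x xy unfolding C1_def C2_def by blast
      then show ?thesis using yi by blast
    qed
  qed
  then obtain u where hh: "h = h'" and u: "u \<in> C1" "u \<in> C2" by blast
  have "a = a' \<and> z = z'" using chunk_same[OF lt(1,2)] u hh unfolding C1_def C2_def by blast
  moreover then have "c = c'" using chunk_eq u hh unfolding C1_def C2_def by blast
  ultimately show ?thesis using hh by simp
qed

lemma LL_lin:
  assumes p: "prime p" and lt: "a < p" "a' < p" "b < p" "b' < p"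
    and bd: "c * r + r \<le> p" "c' * r + r \<le> p"
    and x: "x \<in> chunk p b a z r c" "x \<in> chunk p b' a' z' r c'"
    and y: "y \<in> chunk p b a z r c" "y \<in> chunk p b' a' z' r c'" and xy: "x \<noteq> y"
  shows "chunk p b a z r c = chunk p b' a' z' r c'"
proof -
  have e: "b = b' \<and> a = a' \<and> z = z'" using chunk_inter[OF p lt bd x y xy] .
  then have "c = c'" using chunk_eq x by blast
  then show ?thesis using e by simp
qed

lemma PL_lin:
  assumes p: "prime p" and lt: "a < p" "a' < p" "h < p" "b' < p" and hb: "h \<noteq> b'"
    and bd: "c * (r-1) + (r-1) \<le> p" "c' * r + r \<le> p"
    and x: "x \<in> insert (Inl h) (chunk p h a z (r-1) c)" "x \<in> chunk p b' a' z' r c'"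
    and y: "y \<in> insert (Inl h) (chunk p h a z (r-1) c)" "y \<in> chunk p b' a' z' r c'"
    and xy: "x \<noteq> y"
  shows False
proof -
  have "x \<in> chunk p h a z (r-1) c" "y \<in> chunk p h a z (r-1) c"
    using x y Inl_notin_chunk by (metis insert_iff)+
  then show False using chunk_inter[OF p lt bd _ x(2) _ y(2) xy] hb by blast
qed


context
  fixes p q L Z r :: nat
  assumes p: "prime p" and r2: "r \<ge> 2" and Rp: "r * (r - 1) < p" and qL: "q + L \<le> p"
begin

lemma p0: "p > 0" using p prime_gt_0_nat by blast
lemma bP: "c < r \<Longrightarrow> c * (r - 1) + (r - 1) \<le> p" using bdP Rp by fastforce
lemma bL: "c < r - 1 \<Longrightarrow> c * r + r \<le> p" using bdL Rp by fastforce

lemma ptV: "z < Z \<Longrightarrow> t < r * (r - 1) \<Longrightarrow> pt p b a z t \<in> Vc p q Z r"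
  using p0 unfolding pt_def Vc_def by auto

lemma chV: "z < Z \<Longrightarrow> c * w + w \<le> r * (r - 1) \<Longrightarrow> chunk p b a z w c \<subseteq> Vc p q Z r"
proof
  fix x assume "z < Z" "c * w + w \<le> r * (r - 1)" "x \<in> chunk p b a z w c"
  then show "x \<in> Vc p q Z r" using ptV unfolding chunk_mem by fastforce
qed

lemma finV: "finite (Vc p q Z r)" unfolding Vc_def
  by (intro finite_UnI finite_imageI finite_cartesian_product finite_lessThan)

lemma PenV:
  assumes "e \<in> Pen p q Z r" shows "e \<subseteq> Vc p q Z r \<and> card e = r"
proof -
  obtain h a z c where hz: "h < q" "a < p" "z < Z" "c < r" "e = insert (Inl h) (chunk p h a z (r-1) c)"
    using Pen_mem[THEN iffD1, OF assms] by blast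
  have "chunk p h a z (r-1) c \<subseteq> Vc p q Z r" using chV[OF hz(3) bdP[OF hz(4)]] .
  moreover have "Inl h \<in> Vc p q Z r" using hz unfolding Vc_def by auto
  moreover have "card e = r"
  proof -
    have "finite (chunk p h a z (r-1) c)" unfolding chunk_def by simp
    then have "card e = Suc (card (chunk p h a z (r-1) c))" using hz(5) Inl_notin_chunk by simp
    then show ?thesis using card_chunk r2 by simp
  qed
  ultimately show ?thesis using hz(5) by simp
qed

lemma LowV:
  assumes "e \<in> Low p q L Z r" shows "e \<subseteq> Vc p q Z r \<and> card e = r"
proof -
  obtain l a z c where hz: "l < L" "a < p" "z < Z" "c < r - 1" "e = chunk p (q+l) a z r c"
    using Low_mem[THEN iffD1, OF assms] by blast
  show ?thesis using chV[OF hz(3) bdL[OF hz(4)]] card_chunk hz(5) by simp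
qed

lemma lin_Hc:
  assumes e1: "e1 \<in> Pen p q Z r \<union> Low p q L Z r" and e2: "e2 \<in> Pen p q Z r \<union> Low p q L Z r"
    and ne: "e1 \<noteq> e2"
  shows "card (e1 \<inter> e2) \<le> 1"
proof -
  have "e1 \<subseteq> Vc p q Z r" using e1 PenV LowV by blast
  then have fin: "finite (e1 \<inter> e2)" using finV finite_subset by blast
  have "\<forall>x\<in>e1 \<inter> e2. \<forall>y\<in>e1 \<inter> e2. x = y"
  proof (intro ballI, rule ccontr)
    fix x y assume x: "x \<in> e1 \<inter> e2" and y: "y \<in> e1 \<inter> e2" and xy: "x \<noteq> y"
    consider "e1 \<in> Pen p q Z r" "e2 \<in> Pen p q Z r" | "e1 \<in> Pen p q Z r" "e2 \<in> Low p q L Z r"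
      | "e1 \<in> Low p q L Z r" "e2 \<in> Pen p q Z r" | "e1 \<in> Low p q L Z r" "e2 \<in> Low p q L Z r"
      using e1 e2 by blast
    then show False
    proof cases
      case 1
      obtain h a z c where A: "h < q" "a < p" "z < Z" "c < r" "e1 = insert (Inl h) (chunk p h a z (r-1) c)"
        using Pen_mem[THEN iffD1, OF 1(1)] by blast
      obtain h' a' z' c' where B: "h' < q" "a' < p" "z' < Z" "c' < r" "e2 = insert (Inl h') (chunk p h' a' z' (r-1) c')"
        using Pen_mem[THEN iffD1, OF 1(2)] by blast
      have "h < p" "h' < p" using A(1) B(1) qL by auto
      have "e1 = e2" unfolding A(5) B(5)
        by (rule PP_lin[OF p A(2) B(2) \<open>h < p\<close> \<open>h' < p\<close> bP[OF A(4)] bP[OF B(4)], of x z z' y])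
           (use x y xy A(5) B(5) in simp_all)
      with ne show False by simp
    next
      case 2
      obtain h a z c where A: "h < q" "a < p" "z < Z" "c < r" "e1 = insert (Inl h) (chunk p h a z (r-1) c)"
        using Pen_mem[THEN iffD1, OF 2(1)] by blast
      obtain l a' z' c' where B: "l < L" "a' < p" "z' < Z" "c' < r - 1" "e2 = chunk p (q+l) a' z' r c'"
        using Low_mem[THEN iffD1, OF 2(2)] by blast
      have "h < p" "q + l < p" "h \<noteq> q + l" using A(1) B(1) qL by auto
      show False
        by (rule PL_lin[OF p A(2) B(2) \<open>h < p\<close> \<open>q + l < p\<close> \<open>h \<noteq> q + l\<close> bP[OF A(4)] bL[OF B(4)], of x z z' y])
           (use x y xy A(5) B(5) in simp_all)
    next
      case 3
      obtain h a z c where A: "h < q" "a < p" "z < Z" "c < r" "e2 = insert (Inl h) (chunk p h a z (r-1) c)"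
        using Pen_mem[THEN iffD1, OF 3(2)] by blast
      obtain l a' z' c' where B: "l < L" "a' < p" "z' < Z" "c' < r - 1" "e1 = chunk p (q+l) a' z' r c'"
        using Low_mem[THEN iffD1, OF 3(1)] by blast
      have "h < p" "q + l < p" "h \<noteq> q + l" using A(1) B(1) qL by auto
      show False
        by (rule PL_lin[OF p A(2) B(2) \<open>h < p\<close> \<open>q + l < p\<close> \<open>h \<noteq> q + l\<close> bP[OF A(4)] bL[OF B(4)], of x z z' y])
           (use x y xy A(5) B(5) in simp_all)
    next
      case 4
      obtain l a z c where A: "l < L" "a < p" "z < Z" "c < r - 1" "e1 = chunk p (q+l) a z r c"
        using Low_mem[THEN iffD1, OF 4(1)] by blast
      obtain l' a' z' c' where B: "l' < L" "a' < p" "z' < Z" "c' < r - 1" "e2 = chunk p (q+l') a' z' r c'"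
        using Low_mem[THEN iffD1, OF 4(2)] by blast
      have "q + l < p" "q + l' < p" using A(1) B(1) qL by auto
      have "e1 = e2" unfolding A(5) B(5)
        by (rule LL_lin[OF p A(2) B(2) \<open>q + l < p\<close> \<open>q + l' < p\<close> bL[OF A(4)] bL[OF B(4)], of x z z' y])
           (use x y xy A(5) B(5) in simp_all)
      with ne show False by simp
    qed
  qed
  then show ?thesis using fin by (simp add: card_le_Suc0_iff_eq)
qed

lemma lu_Hc: "linear_uniform r (Vc p q Z r) (Pen p q Z r \<union> Low p q L Z r)"
  unfolding linear_uniform_def using finV PenV LowV lin_Hc by blast

lemma finP: "finite (Pen p q Z r)" unfolding Pen_def by simp
lemma finL: "finite (Low p q L Z r)" unfolding Low_def by simp

lemma disjPL: "Pen p q Z r \<inter> Low p q L Z r = {}"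
proof -
  have "\<exists>h. Inl h \<in> e" if "e \<in> Pen p q Z r" for e using Pen_mem[THEN iffD1, OF that] by blast
  moreover have "\<forall>h. Inl h \<notin> e" if "e \<in> Low p q L Z r" for e using Low_mem[THEN iffD1, OF that] Inl_notin_chunk by blast
  ultimately show ?thesis by blast
qed

lemma cardP: "card (Pen p q Z r) = q * p * Z * r"
proof -
  have "inj_on (\<lambda>(h,a,z,c). insert (Inl h) (chunk p h a z (r-1) c)) ({..<q} \<times> {..<p} \<times> {..<Z} \<times> {..<r})"
  proof (rule inj_onI)
    fix X Y assume X: "X \<in> {..<q} \<times> {..<p} \<times> {..<Z} \<times> {..<r}" and Y: "Y \<in> {..<q} \<times> {..<p} \<times> {..<Z} \<times> {..<r}"
      and XY: "(\<lambda>(h,a,z,c). insert (Inl h) (chunk p h a z (r-1) c)) X = (\<lambda>(h,a,z,c). insert (Inl h) (chunk p h a z (r-1) c)) Y"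
    obtain h a z c where Xe: "X = (h,a,z,c)" by (cases X) auto
    obtain h' a' z' c' where Ye: "Y = (h',a',z',c')" by (cases Y) auto
    have A: "h < q" "a < p" "z < Z" "c < r" using X Xe by auto
    have B: "h' < q" "a' < p" "z' < Z" "c' < r" using Y Ye by auto
    have eq: "insert (Inl h) (chunk p h a z (r-1) c) = insert (Inl h') (chunk p h' a' z' (r-1) c')"
      using XY Xe Ye by simp
    have "Inl h \<in> insert (Inl h') (chunk p h' a' z' (r-1) c')" using eq by blast
    then have hh: "h = h'" using Inl_notin_chunk by blast
    have cc: "chunk p h a z (r-1) c = chunk p h a' z' (r-1) c'"
    proof -
      have "chunk p h a z (r-1) c = insert (Inl h) (chunk p h a z (r-1) c) - {Inl h}" using Inl_notin_chunk by blast
      also have "\<dots> = insert (Inl h) (chunk p h a' z' (r-1) c') - {Inl h}" using eq hh by simp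
      also have "\<dots> = chunk p h a' z' (r-1) c'" using Inl_notin_chunk by blast
      finally show ?thesis .
    qed
    have "card (chunk p h a z (r-1) c) \<noteq> 0" using card_chunk r2 by simp
    then obtain u where u: "u \<in> chunk p h a z (r-1) c" by (metis card.empty ex_in_conv)
    then have u': "u \<in> chunk p h a' z' (r-1) c'" using cc by simp
    have az: "a = a' \<and> z = z'" using chunk_same[OF A(2) B(2) u u'] .
    then have "c = c'" using chunk_eq[OF u] u' by simp
    then show "X = Y" using hh az Xe Ye by simp
  qed
  then show ?thesis unfolding Pen_def by (simp add: card_image card_cartesian_product)
qed

lemma cardL: "card (Low p q L Z r) = L * p * Z * (r - 1)"
proof -
  have "inj_on (\<lambda>(l,a,z,c). chunk p (q+l) a z r c) ({..<L} \<times> {..<p} \<times> {..<Z} \<times> {..<r-1})"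
  proof (rule inj_onI)
    fix X Y assume X: "X \<in> {..<L} \<times> {..<p} \<times> {..<Z} \<times> {..<r-1}" and Y: "Y \<in> {..<L} \<times> {..<p} \<times> {..<Z} \<times> {..<r-1}"
      and XY: "(\<lambda>(l,a,z,c). chunk p (q+l) a z r c) X = (\<lambda>(l,a,z,c). chunk p (q+l) a z r c) Y"
    obtain l a z c where Xe: "X = (l,a,z,c)" by (cases X) auto
    obtain l' a' z' c' where Ye: "Y = (l',a',z',c')" by (cases Y) auto
    have A: "l < L" "a < p" "z < Z" "c < r - 1" using X Xe by auto
    have B: "l' < L" "a' < p" "z' < Z" "c' < r - 1" using Y Ye by auto
    have eq: "chunk p (q+l) a z r c = chunk p (q+l') a' z' r c'" using XY Xe Ye by simp
    have "card (chunk p (q+l) a z r c) = r" by (rule card_chunk)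
    then have "\<not> card (chunk p (q+l) a z r c) \<le> Suc 0" using r2 by simp
    moreover have "finite (chunk p (q+l) a z r c)" unfolding chunk_def by simp
    ultimately obtain x y where xy: "x \<in> chunk p (q+l) a z r c" "y \<in> chunk p (q+l) a z r c" "x \<noteq> y"
      using card_le_Suc0_iff_eq by blast
    have "q + l < p" "q + l' < p" using A(1) B(1) qL by auto
    have e: "q + l = q + l' \<and> a = a' \<and> z = z'"
      by (rule chunk_inter[OF p A(2) B(2) \<open>q + l < p\<close> \<open>q + l' < p\<close> bL[OF A(4)] bL[OF B(4)] xy(1) _ xy(2) _ xy(3)])
         (use eq xy in simp_all)
    then have "c = c'" using chunk_eq[OF xy(1)] eq xy by simp
    then show "X = Y" using e Xe Ye by simp
  qed
  then show ?thesis unfolding Low_def by (simp add: card_image card_cartesian_product)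
qed

lemma card_Hc: "card (Pen p q Z r \<union> Low p q L Z r) = q * p * Z * r + L * p * Z * (r - 1)"
  using card_Un_disjoint[OF finP finL disjPL] cardP cardL by simp

lemma card_Vc: "card (Vc p q Z r) = q + Z * (r * (r - 1)) * p"
proof -
  have "card (Inl ` {..<q} :: vtx set) = q" by (simp add: card_image)
  moreover have "card (Inr ` ({..<Z} \<times> {..<r*(r-1)} \<times> {..<p}) :: vtx set) = Z * (r * (r - 1)) * p"
    by (simp add: card_image card_cartesian_product)
  moreover have "(Inl ` {..<q} :: vtx set) \<inter> Inr ` ({..<Z} \<times> {..<r*(r-1)} \<times> {..<p}) = {}" by auto
  ultimately show ?thesis unfolding Vc_def by (simp add: card_Un_disjoint)
qed

lemma low_deg:
  assumes u: "u \<notin> Inl ` {..<q}"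
  shows "card {e \<in> Pen p q Z r \<union> Low p q L Z r. u \<in> e \<and> e \<inter> Inl ` {..<q} = {}} \<le> L"
proof -
  define LL where "LL = (\<lambda>l. {e \<in> Low p q L Z r. u \<in> e \<and> (\<exists>a z c. a < p \<and> e = chunk p (q+l) a z r c)})"
  have sub: "{e \<in> Pen p q Z r \<union> Low p q L Z r. u \<in> e \<and> e \<inter> Inl ` {..<q} = {}} \<subseteq> (\<Union>l<L. LL l)"
  proof
    fix e assume e: "e \<in> {e \<in> Pen p q Z r \<union> Low p q L Z r. u \<in> e \<and> e \<inter> Inl ` {..<q} = {}}"
    have "e \<notin> Pen p q Z r"
    proof
      assume "e \<in> Pen p q Z r"
      then obtain h where "h < q" "Inl h \<in> e" using Pen_mem[THEN iffD1] by blast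
      then show False using e by blast
    qed
    then have eL: "e \<in> Low p q L Z r" using e by blast
    then obtain l a z c where "l < L" "a < p" "e = chunk p (q+l) a z r c" using Low_mem[THEN iffD1] by blast
    then show "e \<in> (\<Union>l<L. LL l)" unfolding LL_def using e eL by blast
  qed
  have one: "card (LL l) \<le> 1" for l
  proof -
    have "\<forall>e1\<in>LL l. \<forall>e2\<in>LL l. e1 = e2"
    proof (intro ballI)
      fix e1 e2 assume e1: "e1 \<in> LL l" and e2: "e2 \<in> LL l"
      obtain a z c where A: "a < p" "e1 = chunk p (q+l) a z r c" "u \<in> e1" using e1 unfolding LL_def by blast
      obtain a' z' c' where B: "a' < p" "e2 = chunk p (q+l) a' z' r c'" "u \<in> e2" using e2 unfolding LL_def by blast
      have az: "a = a' \<and> z = z'" using chunk_same[OF A(1) B(1)] A B by blast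
      then have "c = c'" using chunk_eq A B by blast
      then show "e1 = e2" using A B az by simp
    qed
    moreover have "finite (LL l)" unfolding LL_def using finL by simp
    ultimately show ?thesis by (simp add: card_le_Suc0_iff_eq)
  qed
  have "card {e \<in> Pen p q Z r \<union> Low p q L Z r. u \<in> e \<and> e \<inter> Inl ` {..<q} = {}} \<le> card (\<Union>l<L. LL l)"
    by (rule card_mono[OF _ sub]) (simp add: LL_def finL)
  also have "\<dots> \<le> (\<Sum>l<L. card (LL l))" by (rule card_UN_le) simp
  also have "\<dots> \<le> (\<Sum>l<L. 1)" by (rule sum_mono) (rule one)
  finally show ?thesis by simp
qed

end


lemma image_hyp:
  assumes lu: "linear_uniform r W H" and inj: "inj_on \<phi> W" and sub: "\<phi> ` W \<subseteq> V" and finV: "finite V"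
  shows "linear_uniform r V ((`) \<phi> ` H)" "card ((`) \<phi> ` H) = card H"
proof -
  note L = lu_props[OF lu]
  have ie: "inj_on \<phi> e" if "e \<in> H" for e using inj L(3)[OF that] inj_on_subset by blast
  show "linear_uniform r V ((`) \<phi> ` H)"
    unfolding linear_uniform_def
  proof (intro conjI ballI impI)
    show "finite V" by (rule finV)
  next
    fix E assume "E \<in> (`) \<phi> ` H"
    then obtain e where e: "e \<in> H" "E = \<phi> ` e" by blast
    show "E \<subseteq> V" using e sub L(3) by blast
    show "card E = r" using e ie L(4) by (simp add: card_image)
  next
    fix E1 E2 assume E1: "E1 \<in> (`) \<phi> ` H" and E2: "E2 \<in> (`) \<phi> ` H" and ne: "E1 \<noteq> E2"
    obtain e1 where e1: "e1 \<in> H" "E1 = \<phi> ` e1" using E1 by blast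
    obtain e2 where e2: "e2 \<in> H" "E2 = \<phi> ` e2" using E2 by blast
    have "e1 \<noteq> e2" using ne e1(2) e2(2) by auto
    have "E1 \<inter> E2 = \<phi> ` (e1 \<inter> e2)" using e1 e2 inj_on_image_Int[OF inj L(3)[OF e1(1)] L(3)[OF e2(1)]] by simp
    then have "card (E1 \<inter> E2) \<le> card (e1 \<inter> e2)" by (simp add: card_image_le L(5) e1(1))
    also have "\<dots> \<le> 1" using L(6)[OF e1(1) e2(1) \<open>e1 \<noteq> e2\<close>] .
    finally show "card (E1 \<inter> E2) \<le> 1" .
  qed
  have "inj_on ((`) \<phi>) H"
  proof (rule inj_onI)
    fix e1 e2 assume "e1 \<in> H" "e2 \<in> H" "\<phi> ` e1 = \<phi> ` e2"
    then show "e1 = e2" using inj_on_image_eq_iff[OF inj L(3)[OF \<open>e1 \<in> H\<close>] L(3)[OF \<open>e2 \<in> H\<close>]] by simp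
  qed
  then show "card ((`) \<phi> ` H) = card H" by (simp add: card_image)
qed

lemma image_low:
  assumes lu: "linear_uniform r W H" and inj: "inj_on \<phi> W" and TW: "T \<subseteq> W"
    and low: "\<And>u0. u0 \<in> W \<Longrightarrow> u0 \<notin> T \<Longrightarrow> card {e \<in> H. u0 \<in> e \<and> e \<inter> T = {}} \<le> m"
    and u: "u \<notin> \<phi> ` T"
  shows "card {E \<in> (`) \<phi> ` H. u \<in> E \<and> E \<inter> \<phi> ` T = {}} \<le> m"
proof (cases "u \<in> \<phi> ` W")
  case False
  note L = lu_props[OF lu]
  have "E \<notin> {E \<in> (`) \<phi> ` H. u \<in> E \<and> E \<inter> \<phi> ` T = {}}" for E
  proof
    assume "E \<in> {E \<in> (`) \<phi> ` H. u \<in> E \<and> E \<inter> \<phi> ` T = {}}"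
    then obtain e where e: "e \<in> H" "E = \<phi> ` e" "u \<in> E" by blast
    then have "u \<in> \<phi> ` W" using L(3)[OF e(1)] by (metis image_mono subsetD)
    with False show False by simp
  qed
  then have "{E \<in> (`) \<phi> ` H. u \<in> E \<and> E \<inter> \<phi> ` T = {}} = {}" by (meson equals0I)
  then show ?thesis by (simp only: card.empty)
next
  case True
  note L = lu_props[OF lu]
  obtain u0 where u0: "u0 \<in> W" "u = \<phi> u0" using True by (meson imageE)
  have u0T: "u0 \<notin> T" using u u0(2) by (meson imageI)
  have "{E \<in> (`) \<phi> ` H. u \<in> E \<and> E \<inter> \<phi> ` T = {}} \<subseteq> (`) \<phi> ` {e \<in> H. u0 \<in> e \<and> e \<inter> T = {}}"
  proof
    fix E assume E: "E \<in> {E \<in> (`) \<phi> ` H. u \<in> E \<and> E \<inter> \<phi> ` T = {}}"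
    then have E1: "E \<in> (`) \<phi> ` H" and E2: "u \<in> E" and E3: "E \<inter> \<phi> ` T = {}" by simp_all
    obtain e where e: "e \<in> H" "E = \<phi> ` e" using E1 by (meson imageE)
    have "\<phi> u0 \<in> \<phi> ` e" using E2 e(2) u0(2) by simp
    then obtain x where x: "x \<in> e" "\<phi> x = \<phi> u0" by (metis imageE)
    have xW: "x \<in> W" using L(3)[OF e(1)] x(1) by (rule subsetD)
    have "x = u0" by (rule inj_onD[OF inj x(2) xW u0(1)])
    then have "u0 \<in> e" using x by simp
    moreover have "e \<inter> T = {}"
    proof (rule equals0I)
      fix y assume "y \<in> e \<inter> T"
      then have "\<phi> y \<in> E \<inter> \<phi> ` T" using e(2) by simp
      with E3 show False by simp
    qed
    ultimately have "e \<in> {e \<in> H. u0 \<in> e \<and> e \<inter> T = {}}" using e(1) by simp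
    then show "E \<in> (`) \<phi> ` {e \<in> H. u0 \<in> e \<and> e \<inter> T = {}}" using e(2) by (rule rev_image_eqI)
  qed
  then have "card {E \<in> (`) \<phi> ` H. u \<in> E \<and> E \<inter> \<phi> ` T = {}} \<le> card ((`) \<phi> ` {e \<in> H. u0 \<in> e \<and> e \<inter> T = {}})"
    by (rule card_mono[rotated]) (simp add: L(2))
  also have "\<dots> \<le> card {e \<in> H. u0 \<in> e \<and> e \<inter> T = {}}" by (rule card_image_le) (simp add: L(2))
  also have "\<dots> \<le> m" using low[OF u0(1) u0T] .
  finally show ?thesis .
qed

lemma ex_lin_finite:
  "finite {card H | H :: nat set set. linear_uniform r {..<n} H \<and> \<not> contains_copy H F}"
proof -
  have "{card H | H :: nat set set. linear_uniform r {..<n} H \<and> \<not> contains_copy H F} \<subseteq> card ` Pow (Pow {..<n})"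
  proof
    fix x assume "x \<in> {card H | H :: nat set set. linear_uniform r {..<n} H \<and> \<not> contains_copy H F}"
    then obtain H :: "nat set set" where H: "x = card H" "linear_uniform r {..<n} H" by blast
    then have "H \<in> Pow (Pow {..<n})" unfolding linear_uniform_def by auto
    then show "x \<in> card ` Pow (Pow {..<n})" using H(1) by blast
  qed
  then show ?thesis by (rule finite_subset) simp
qed

lemma ex_lin_ge:
  assumes "linear_uniform r {..<n} H" "\<not> contains_copy H F"
  shows "card H \<le> ex_lin r n F"
  unfolding ex_lin_def
proof (rule Max_ge[OF ex_lin_finite])
  show "card H \<in> {card H | H :: nat set set. linear_uniform r {..<n} H \<and> \<not> contains_copy H F}"
    using assms by blast
qed

lemma ex_lin_attained:
  assumes "F \<noteq> {}"
  shows "\<exists>H. linear_uniform r {..<n} H \<and> \<not> contains_copy H F \<and> ex_lin r n F = card H"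
proof -
  have "linear_uniform r {..<n} ({} :: nat set set)" unfolding linear_uniform_def by simp
  moreover have "\<not> contains_copy ({} :: nat set set) F" using assms unfolding contains_copy_def by blast
  ultimately have ne: "{card H | H :: nat set set. linear_uniform r {..<n} H \<and> \<not> contains_copy H F} \<noteq> {}" by blast
  have "ex_lin r n F \<in> {card H | H :: nat set set. linear_uniform r {..<n} H \<and> \<not> contains_copy H F}"
    unfolding ex_lin_def by (rule Max_in[OF ex_lin_finite ne])
  then obtain H :: "nat set set" where "ex_lin r n F = card H" "linear_uniform r {..<n} H" "\<not> contains_copy H F"
    by blast
  then show ?thesis by blast
qed


lemma sfp_nonempty:
  assumes "k \<ge> 1" "d 1 \<ge> 1"
  shows "star_forest_plus r k d \<noteq> {}"
  using assms unfolding star_forest_plus_def by blast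

lemma lower_main:
  fixes k r :: nat and d :: "nat \<Rightarrow> nat"
  assumes k1: "k \<ge> 1" and r2: "r \<ge> 2"
    and dpos: "\<And>i. 1 \<le> i \<Longrightarrow> i \<le> k \<Longrightarrow> d i \<ge> 1"
    and dmono: "\<And>i j. 1 \<le> i \<Longrightarrow> i \<le> j \<Longrightarrow> j \<le> k \<Longrightarrow> d j \<le> d i"
    and i0: "i0 \<in> {1..k}"
  shows "\<exists>C::nat. \<forall>n\<ge>C. ((real (d i0) - 1) / real r + (real i0 - 1) / (real r - 1)) * (real n - real C)
            \<le> real (ex_lin r n (star_forest_plus r k d))"
proof -
  define q where "q = i0 - 1"
  define L where "L = d i0 - 1"
  define R where "R = r * (r - 1)"
  obtain p where p: "prime p" "p > R + q + L" using bigger_prime by blast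
  have Rp: "r * (r - 1) < p" and qL: "q + L \<le> p" using p(2) unfolding R_def by auto
  have R0: "R > 0" unfolding R_def using r2 by simp
  have p0: "p > 0" using p(1) prime_gt_0_nat by blast
  have di0: "d i0 \<ge> 1" using dpos i0 by auto
  define a where "a = (real (d i0) - 1) / real r + (real i0 - 1) / (real r - 1)"
  have a0: "a \<ge> 0" unfolding a_def using di0 i0 r2 by (auto intro!: add_nonneg_nonneg divide_nonneg_pos)
  have aR: "a * real R = real L * (real r - 1) + real q * real r"
  proof -
    have "real (d i0) - 1 = real L" unfolding L_def using di0 by simp
    moreover have "real i0 - 1 = real q" unfolding q_def using i0 by auto
    moreover have "real R = real r * (real r - 1)" unfolding R_def using r2 by (simp add: of_nat_diff)
    moreover have "real r \<noteq> 0" "real r - 1 \<noteq> 0" using r2 by auto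
    ultimately have "a * real R = (real L / real r + real q / (real r - 1)) * (real r * (real r - 1))"
      unfolding a_def by simp
    also have "\<dots> = real L / real r * (real r * (real r - 1)) + real q / (real r - 1) * (real r * (real r - 1))"
      by (rule distrib_right)
    also have "real L / real r * (real r * (real r - 1)) = real L * (real r - 1)" using \<open>real r \<noteq> 0\<close> by simp
    also have "real q / (real r - 1) * (real r * (real r - 1)) = real q * real r" using \<open>real r - 1 \<noteq> 0\<close> by simp
    finally show ?thesis .
  qed
  show ?thesis
  proof (intro exI allI impI)
    fix n assume nC: "q + R * p \<le> n"
    define Z where "Z = (n - q) div (R * p)"
    have ZR: "Z * (R * p) \<le> n - q" unfolding Z_def by (rule div_times_less_eq_dividend)
    have ZR2: "n - q < Z * (R * p) + R * p"
    proof -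
      have "n - q = Z * (R * p) + (n - q) mod (R * p)" unfolding Z_def by (rule div_mult_mod_eq[symmetric])
      moreover have "(n - q) mod (R * p) < R * p" using R0 p0 by simp
      ultimately show ?thesis by linarith
    qed
    have cV: "card (Vc p q Z r) \<le> card {..<n}"
      using card_Vc[OF p(1) r2 Rp qL] ZR nC unfolding R_def by (simp add: mult.assoc)
    obtain \<phi> where \<phi>: "\<phi> ` Vc p q Z r \<subseteq> {..<n}" "inj_on \<phi> (Vc p q Z r)"
      using card_le_inj[OF finV[OF p(1) r2 Rp qL] _ cV] by blast
    define Hc where "Hc = Pen p q Z r \<union> Low p q L Z r"
    have luc: "linear_uniform r (Vc p q Z r) Hc" unfolding Hc_def by (rule lu_Hc[OF p(1) r2 Rp qL])
    define H' where "H' = (`) \<phi> ` Hc"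
    have lu': "linear_uniform r {..<n} H'" unfolding H'_def by (rule image_hyp(1)[OF luc \<phi>(2) \<phi>(1)]) simp
    have cH': "card H' = q * p * Z * r + L * p * Z * (r - 1)"
      unfolding H'_def using image_hyp(2)[OF luc \<phi>(2) \<phi>(1)] card_Hc[OF p(1) r2 Rp qL] unfolding Hc_def by simp
    define T where "T = (Inl ` {..<q} :: vtx set)"
    have TW: "T \<subseteq> Vc p q Z r" unfolding T_def Vc_def by auto
    have nc: "\<not> contains_copy H' (star_forest_plus r k d)"
    proof
      assume cc: "contains_copy H' (star_forest_plus r k d)"
      obtain c S where ps: "pstar H' d {1..k} c S" using pstar_from_copy[OF r2 cc dpos] by blast
      have "\<not> pstar H' d {1..k} c S"
      proof (rule no_pstar_criterion)
        show "finite H'" using lu_props(2)[OF lu'] .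
        show "finite (\<phi> ` T)" unfolding T_def by simp
        show "1 \<le> i0" "i0 \<le> k" using i0 by auto
        have "card (\<phi> ` T) \<le> card T" by (rule card_image_le) (simp add: T_def)
        also have "card T = q" unfolding T_def by (simp add: card_image)
        finally show "card (\<phi> ` T) < i0" unfolding q_def using i0 by auto
        show "\<And>i j. 1 \<le> i \<Longrightarrow> i \<le> j \<Longrightarrow> j \<le> k \<Longrightarrow> d j \<le> d i" by (rule dmono)
        fix u assume u: "u \<notin> \<phi> ` T"
        have "card {E \<in> H'. u \<in> E \<and> E \<inter> \<phi> ` T = {}} \<le> L"
          unfolding H'_def
        proof (rule image_low[OF luc \<phi>(2) TW _ u])
          fix u0 assume "u0 \<in> Vc p q Z r" "u0 \<notin> T"
          then show "card {e \<in> Hc. u0 \<in> e \<and> e \<inter> T = {}} \<le> L"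
            unfolding Hc_def T_def using low_deg[OF p(1) r2 Rp qL] by blast
        qed
        then show "card {E \<in> H'. u \<in> E \<and> E \<inter> \<phi> ` T = {}} < d i0" unfolding L_def using di0 by simp
      qed
      with ps show False by simp
    qed
    have ge: "card H' \<le> ex_lin r n (star_forest_plus r k d)" by (rule ex_lin_ge[OF lu' nc])
    have "real n - real (q + R * p) \<le> real Z * real R * real p"
    proof -
      have "real (n - q) < real (Z * (R * p) + R * p)" using ZR2 by (simp only: of_nat_less_iff)
      moreover have "real (n - q) = real n - real q" using nC by (simp add: of_nat_diff)
      ultimately show ?thesis by (simp add: algebra_simps)
    qed
    then have "a * (real n - real (q + R * p)) \<le> a * (real Z * real R * real p)"
      using a0 by (intro mult_left_mono)
    also have "\<dots> = real Z * real p * (a * real R)" by (simp add: algebra_simps)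
    also have "\<dots> = real (card H')"
    proof -
      have r1: "1 \<le> r" using r2 by simp
      have "real (card H') = real q * real p * real Z * real r + real L * real p * real Z * (real r - 1)"
        unfolding cH' of_nat_add of_nat_mult of_nat_diff[OF r1] by simp
      then show ?thesis unfolding aR by (simp add: algebra_simps)
    qed
    also have "\<dots> \<le> real (ex_lin r n (star_forest_plus r k d))" using ge by simp
    finally have "a * (real n - real (q + R * p)) \<le> real (ex_lin r n (star_forest_plus r k d))" .
    then show "((real (d i0) - 1) / real r + (real i0 - 1) / (real r - 1)) * (real n - real (q + R * p))
            \<le> real (ex_lin r n (star_forest_plus r k d))" unfolding a_def .
  qed
qed


theorem theorem1p7:
  fixes k r :: nat and d :: "nat \<Rightarrow> nat"
  assumes "k \<ge> 1" and "r \<ge> 2"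
    and "\<And>i. 1 \<le> i \<Longrightarrow> i \<le> k \<Longrightarrow> d i \<ge> 1"
    and "\<And>i j. 1 \<le> i \<Longrightarrow> i \<le> j \<Longrightarrow> j \<le> k \<Longrightarrow> d j \<le> d i"
  shows "(\<exists>N. \<forall>n\<ge>N. real (ex_lin r n (star_forest_plus r k d)) \<le>
            Max ((\<lambda>i. ((real (d i) - 1) / real r + (real i - 1) / (real r - 1))
                        * (real n - real i + 1)
                      + real ((i - 1) choose 2) / real (r choose 2)) ` {1..k}))
       \<and> ((\<lambda>n. real (ex_lin r n (star_forest_plus r k d)) / real n) \<longlonglongrightarrow>
            Max ((\<lambda>i. (real (d i) - 1) / real r + (real i - 1) / (real r - 1)) ` {1..k}))"
proof -
  note k1 = assms(1) and r2 = assms(2) and dpos = assms(3) and dmono = assms(4)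
  define F where "F = star_forest_plus r k d"
  define f where "f = (\<lambda>n i. ((real (d i) - 1) / real r + (real i - 1) / (real r - 1))
                        * (real n - real i + 1) + real ((i - 1) choose 2) / real (r choose 2))"
  define g where "g = (\<lambda>i. (real (d i) - 1) / real r + (real i - 1) / (real r - 1))"
  define N0 where "N0 = 2 * k + d 1 + ((1 + d 1 * r) * (1 + (k + k * (1 + d 1 * r) + d 1) * r)) * (k + k * (1 + d 1 * r) + d 1)"
  have Fne: "F \<noteq> {}" unfolding F_def using sfp_nonempty[OF k1] dpos[of 1] k1 by simp
  have finK: "finite {1..k}" and neK: "{1..k} \<noteq> {}" using k1 by auto
  have upper: "real (ex_lin r n F) \<le> Max (f n ` {1..k})" if n: "n \<ge> N0" for n
  proof -
    obtain H where H: "linear_uniform r {..<n} H" "\<not> contains_copy H F" "ex_lin r n F = card H"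
      using ex_lin_attained[OF Fne] by blast
    have np: "\<not> (\<exists>c S. pstar H d {1..k} c S)"
      using copy_from_pstar[OF H(1) r2] H(2) unfolding F_def by blast
    have "N0 \<le> card {..<n}" using n by simp
    then obtain j where j: "j \<in> {1..k}" "real (card H) \<le> f (card {..<n}) j"
      using upper_main[OF k1 r2 dpos dmono H(1) np] unfolding N0_def f_def by blast
    have "f (card {..<n}) j \<le> Max (f n ` {1..k})" using j(1) finK by simp
    then show ?thesis using j(2) H(3) by simp
  qed
  have part1: "\<exists>N. \<forall>n\<ge>N. real (ex_lin r n F) \<le> Max (f n ` {1..k})" using upper by blast
  define A where "A = Max (g ` {1..k})"
  have "A \<in> g ` {1..k}" unfolding A_def using finK neK by (intro Max_in) auto
  then obtain i0 where i0: "i0 \<in> {1..k}" "g i0 = A" by (metis imageE)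
  obtain C :: nat where C: "\<And>n. n \<ge> C \<Longrightarrow> g i0 * (real n - real C) \<le> real (ex_lin r n F)"
    using lower_main[of k r d i0, OF k1 r2 dpos dmono i0(1)] unfolding g_def F_def by blast
  define B where "B = Max ((\<lambda>i. real ((i - 1) choose 2) / real (r choose 2)) ` {1..k})"
  have g0: "g i \<ge> 0" if "i \<in> {1..k}" for i
    unfolding g_def using dpos[of i] that r2 by (auto intro!: add_nonneg_nonneg divide_nonneg_pos)
  have fle: "f n i \<le> A * real n + B" if i: "i \<in> {1..k}" for n i
  proof -
    have "f n i = g i * (real n - real i + 1) + real ((i - 1) choose 2) / real (r choose 2)"
      unfolding f_def g_def by simp
    also have "g i * (real n - real i + 1) \<le> g i * real n" using g0[OF i] i by (intro mult_left_mono) auto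
    also have "g i * real n \<le> A * real n" unfolding A_def using i finK by (intro mult_right_mono) auto
    also have "real ((i - 1) choose 2) / real (r choose 2) \<le> B" unfolding B_def using i by (intro Max_ge) auto
    finally show ?thesis by simp
  qed
  have lim: "(\<lambda>n. real (ex_lin r n F) / real n) \<longlonglongrightarrow> A"
  proof (rule tendsto_sandwich)
    show "eventually (\<lambda>n. A - A * real C / real n \<le> real (ex_lin r n F) / real n) sequentially"
    proof (rule eventually_sequentiallyI)
      fix n assume n: "max C 1 \<le> n"
      then have "A * (real n - real C) \<le> real (ex_lin r n F)" using C i0(2) by auto
      moreover have "real n > 0" using n by simp
      ultimately have "(A * (real n - real C)) / real n \<le> real (ex_lin r n F) / real n"
        by (intro divide_right_mono) auto
      moreover have "A - A * real C / real n = (A * (real n - real C)) / real n"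
        using \<open>real n > 0\<close> by (simp add: field_simps)
      ultimately show "A - A * real C / real n \<le> real (ex_lin r n F) / real n" by simp
    qed
    show "eventually (\<lambda>n. real (ex_lin r n F) / real n \<le> A + B / real n) sequentially"
    proof (rule eventually_sequentiallyI)
      fix n assume n: "max N0 1 \<le> n"
      have "real (ex_lin r n F) \<le> Max (f n ` {1..k})" using upper n by simp
      also have "\<dots> \<le> A * real n + B" using fle finK neK by simp
      finally have "real (ex_lin r n F) \<le> A * real n + B" .
      moreover have "real n > 0" using n by simp
      ultimately have "real (ex_lin r n F) / real n \<le> (A * real n + B) / real n"
        by (intro divide_right_mono) auto
      moreover have "(A * real n + B) / real n = A + B / real n"
        using \<open>real n > 0\<close> by (simp add: field_simps)
      ultimately show "real (ex_lin r n F) / real n \<le> A + B / real n" by simp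
    qed
    show "(\<lambda>n. A - A * real C / real n) \<longlonglongrightarrow> A"
      using tendsto_diff[OF tendsto_const lim_const_over_n[of "A * real C"]] by simp
    show "(\<lambda>n. A + B / real n) \<longlonglongrightarrow> A"
      using tendsto_add[OF tendsto_const lim_const_over_n[of B]] by simp
  qed
  show ?thesis using part1 lim unfolding F_def f_def A_def g_def by simp
qed


end
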